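(* Let $\Phi=(V,C)$ be a $k$-uniform CNF formula with $n=|V|$ variables such that each variable belongs to at most $d$ clauses, and let $\mu$ be the uniform distribution over its satisfying assignments. Let $k_\alpha,k_\beta\ge1$ be integers with $k_\alpha+k_\beta\le k$, and let $\mathcal{M}\subseteq V$ be such that every clause contains at least $k_\alpha$ variables of $\mathcal{M}$ and at least $k_\beta$ variables of $V\setminus\mathcal{M}$. Let $P_{\mathsf{Glauber}}$ be the Glauber dynamics on $\{0,1\}^{\mathcal{M}}$: from state $X$, pick $v\in\mathcal{M}$ uniformly at random, keep $X(u)$ for all $u\in\mathcal{M}\setminus\{v\}$, and resample $X(v)$ from $\mu_v(\cdot\mid X(\mathcal{M}\setminus\{v\}))$. If $2^{k_\beta}\ge 2^{16}d^9k^9$, then for every $\delta>0$, $$T_{\mathsf{mix}}(P_{\mathsf{Glauber}},\delta)\le\left\lceil 2n\log\frac{n}{\delta}\right\rceil.$$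
   Context: A CNF formula is $k$-uniform if every clause contains exactly $k$ literals on distinct variables (never both $x$ and $\neg x$). For $S\subseteq V$, $\mu_S$ is the marginal of $\mu$ on $S$, and $\mu_S(\cdot\mid \sigma)$ denotes this marginal conditioned on a partial assignment $\sigma$ of variables outside $S$; $\mu_v=\mu_{\{v\}}$. The stationary distribution of $P_{\mathsf{Glauber}}$ is the marginal $\mu_{\mathcal{M}}$. The mixing time is $T_{\mathsf{mix}}(P,\delta)=\max_{X_0}\min\{t: d_{TV}(P^t(X_0,\cdot),\mu_{\mathcal{M}})\le\delta\}$, where $d_{TV}$ is total variation distance. $\log=\log_2$. *)

theory Defs
  imports "HOL-Library.FuncSet" Complex_Main
begin

text \<open>A literal is a pair (v, b): it is satisfied by an assignment sigma iff sigma v = b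
  (b = True: positive literal x, b = False: negative literal not x).\<close>

type_synonym 'v clause = "('v \<times> bool) set"

definition cnf_formula :: "'v set \<Rightarrow> 'v clause set \<Rightarrow> bool" where
  "cnf_formula V C \<longleftrightarrow> finite V \<and> finite C \<and> (\<forall>c\<in>C. finite c \<and> fst ` c \<subseteq> V)"

definition k_uniform :: "nat \<Rightarrow> 'v clause set \<Rightarrow> bool" where
  "k_uniform k C \<longleftrightarrow> (\<forall>c\<in>C. card c = k \<and> card (fst ` c) = k)"

definition clause_vars :: "'v clause \<Rightarrow> 'v set" where
  "clause_vars c = fst ` c"

definition max_degree_le :: "'v set \<Rightarrow> 'v clause set \<Rightarrow> nat \<Rightarrow> bool" where
  "max_degree_le V C d \<longleftrightarrow> (\<forall>v\<in>V. card {c\<in>C. v \<in> clause_vars c} \<le> d)"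

definition satisfies :: "('v \<Rightarrow> bool) \<Rightarrow> 'v clause set \<Rightarrow> bool" where
  "satisfies \<sigma> C \<longleftrightarrow> (\<forall>c\<in>C. \<exists>(v, b)\<in>c. \<sigma> v = b)"

definition sat_assignments :: "'v set \<Rightarrow> 'v clause set \<Rightarrow> ('v \<Rightarrow> bool) set" where
  "sat_assignments V C = {\<sigma> \<in> V \<rightarrow>\<^sub>E (UNIV :: bool set). satisfies \<sigma> C}"

definition marginal :: "'v set \<Rightarrow> 'v clause set \<Rightarrow> 'v set \<Rightarrow> ('v \<Rightarrow> bool) \<Rightarrow> real" where
  "marginal V C S \<tau> =
     real (card {\<omega> \<in> sat_assignments V C. restrict \<omega> S = \<tau>})
     / real (card (sat_assignments V C))"

text \<open>Conditional marginal mu_S(tau | sigma), sigma a partial assignment on W (W disjoint from S).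
  (Division by zero yields 0 by Isabelle convention; irrelevant when the condition has positive
  probability.)\<close>
definition cond_marginal ::
  "'v set \<Rightarrow> 'v clause set \<Rightarrow> 'v set \<Rightarrow> ('v \<Rightarrow> bool) \<Rightarrow> 'v set \<Rightarrow> ('v \<Rightarrow> bool) \<Rightarrow> real" where
  "cond_marginal V C S \<tau> W \<sigma> =
     real (card {\<omega> \<in> sat_assignments V C. restrict \<omega> S = \<tau> \<and> restrict \<omega> W = \<sigma>})
     / real (card {\<omega> \<in> sat_assignments V C. restrict \<omega> W = \<sigma>})"

definition glauber :: "'v set \<Rightarrow> 'v clause set \<Rightarrow> 'v set \<Rightarrow> ('v \<Rightarrow> bool) \<Rightarrow> ('v \<Rightarrow> bool) \<Rightarrow> real" where
  "glauber V C M X Y =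
     (if X \<in> M \<rightarrow>\<^sub>E (UNIV :: bool set) \<and> Y \<in> M \<rightarrow>\<^sub>E (UNIV :: bool set) then
        (1 / real (card M)) *
        (\<Sum>v\<in>M. if restrict Y (M - {v}) = restrict X (M - {v})
                 then cond_marginal V C {v} (restrict Y {v}) (M - {v}) (restrict X (M - {v}))
                 else 0)
      else 0)"

fun kernel_pow :: "'s set \<Rightarrow> ('s \<Rightarrow> 's \<Rightarrow> real) \<Rightarrow> nat \<Rightarrow> 's \<Rightarrow> 's \<Rightarrow> real" where
  "kernel_pow S P 0 x y = (if x = y then 1 else 0)"
| "kernel_pow S P (Suc t) x y = (\<Sum>z\<in>S. kernel_pow S P t x z * P z y)"

definition dtv :: "'s set \<Rightarrow> ('s \<Rightarrow> real) \<Rightarrow> ('s \<Rightarrow> real) \<Rightarrow> real" where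
  "dtv S p q = (1/2) * (\<Sum>y\<in>S. \<bar>p y - q y\<bar>)"

definition mixing_time :: "'s set \<Rightarrow> ('s \<Rightarrow> 's \<Rightarrow> real) \<Rightarrow> ('s \<Rightarrow> real) \<Rightarrow> real \<Rightarrow> nat" where
  "mixing_time S P \<pi> \<delta> = Max ((\<lambda>x0. LEAST t. dtv S (kernel_pow S P t x0) \<pi> \<le> \<delta>) ` S)"

end

theory Submission
  imports Defs
begin

definition Om :: "'w set \<Rightarrow> ('w \<Rightarrow> bool) set" where
  "Om W = W \<rightarrow>\<^sub>E (UNIV :: bool set)"

definition cnt :: "'w set \<Rightarrow> (('w \<Rightarrow> bool) \<Rightarrow> bool) \<Rightarrow> nat" where
  "cnt W P = card {\<tau> \<in> Om W. P \<tau>}"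

definition dep :: "'w set \<Rightarrow> 'w set \<Rightarrow> (('w \<Rightarrow> bool) \<Rightarrow> bool) \<Rightarrow> bool" where
  "dep W T P \<longleftrightarrow> (\<forall>\<tau> \<tau>'. \<tau> \<in> Om W \<longrightarrow> \<tau>' \<in> Om W \<longrightarrow> (\<forall>u\<in>T. \<tau> u = \<tau>' u) \<longrightarrow> P \<tau> = P \<tau>')"

definition mg :: "'w set \<Rightarrow> ('w \<Rightarrow> bool) \<Rightarrow> ('w \<Rightarrow> bool) \<Rightarrow> ('w \<Rightarrow> bool)" where
  "mg T x y = (\<lambda>u. if u \<in> T then x u else y u)"

lemma finite_Om: "finite W \<Longrightarrow> finite (Om W)"
  unfolding Om_def by (simp add: finite_PiE)

lemma card_Om: "finite W \<Longrightarrow> card (Om W) = 2 ^ card W"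
  unfolding Om_def by (simp add: card_PiE)

lemma mg_Om: "T \<subseteq> W \<Longrightarrow> x \<in> Om W \<Longrightarrow> y \<in> Om W \<Longrightarrow> mg T x y \<in> Om W"
  unfolding Om_def mg_def by (auto simp: PiE_def extensional_def)

lemma indep_cnt:
  assumes W: "finite W" and T: "T \<subseteq> W" and dA: "dep W T A" and dG: "dep W (W - T) G"
  shows "cnt W (\<lambda>\<tau>. A \<tau> \<and> G \<tau>) * card (Om W) = cnt W A * cnt W G"
proof -
  let ?f = "\<lambda>(x, y). (mg T x y, mg T y x)"
  let ?S1 = "{\<tau> \<in> Om W. A \<tau>} \<times> {\<tau> \<in> Om W. G \<tau>}"
  let ?S2 = "{\<tau> \<in> Om W. A \<tau> \<and> G \<tau>} \<times> Om W"
  have ff: "?f (?f p) = p" for p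
    unfolding mg_def by (cases p) (auto simp: fun_eq_iff)
  have mapsto1: "?f p \<in> ?S2" if "p \<in> ?S1" for p
  proof -
    obtain x y where p: "p = (x, y)" by (cases p)
    have x: "x \<in> Om W" "A x" and y: "y \<in> Om W" "G y" using that p by auto
    have m1: "mg T x y \<in> Om W" "mg T y x \<in> Om W" using mg_Om[OF T] x y by auto
    have "\<forall>u\<in>T. mg T x y u = x u" by (simp add: mg_def)
    hence "A (mg T x y) = A x" using dA[unfolded dep_def, rule_format, OF m1(1) x(1)] by blast
    moreover have "\<forall>u\<in>W-T. mg T x y u = y u" by (simp add: mg_def)
    hence "G (mg T x y) = G y" using dG[unfolded dep_def, rule_format, OF m1(1) y(1)] by blast
    ultimately show ?thesis using p x y m1 by auto
  qed
  have mapsto2: "?f p \<in> ?S1" if "p \<in> ?S2" for p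
  proof -
    obtain x y where p: "p = (x, y)" by (cases p)
    have x: "x \<in> Om W" "A x" "G x" and y: "y \<in> Om W" using that p by auto
    have m1: "mg T x y \<in> Om W" "mg T y x \<in> Om W" using mg_Om[OF T] x y by auto
    have "\<forall>u\<in>T. mg T x y u = x u" by (simp add: mg_def)
    hence "A (mg T x y) = A x" using dA[unfolded dep_def, rule_format, OF m1(1) x(1)] by blast
    moreover have "\<forall>u\<in>W-T. mg T y x u = x u" by (simp add: mg_def)
    hence "G (mg T y x) = G x" using dG[unfolded dep_def, rule_format, OF m1(2) x(1)] by blast
    ultimately show ?thesis using p x y m1 by auto
  qed
  have "bij_betw ?f ?S1 ?S2"
    apply (rule bij_betw_byWitness[where f'="?f"])
    using ff mapsto1 mapsto2 by auto
  hence "card ?S1 = card ?S2" by (rule bij_betw_same_card)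
  thus ?thesis unfolding cnt_def by (simp add: card_cartesian_product)
qed

lemma cnt_fix:
  assumes W: "finite W" and Q: "Q \<subseteq> W" and a: "a \<in> Q \<rightarrow>\<^sub>E (UNIV::bool set)"
  shows "cnt W (\<lambda>\<tau>. restrict \<tau> Q = a) * 2 ^ card Q = 2 ^ card W"
proof -
  let ?S = "{\<tau> \<in> Om W. restrict \<tau> Q = a}"
  have "bij_betw (\<lambda>\<tau>. restrict \<tau> (W - Q)) ?S (Om (W - Q))"
  proof (rule bij_betw_byWitness[where f'="\<lambda>\<tau>'. mg Q a \<tau>'"])
    show "\<forall>x\<in>?S. mg Q a (restrict x (W - Q)) = x"
      using Q unfolding Om_def mg_def
      by (auto simp: fun_eq_iff PiE_def extensional_def restrict_def)
    show "\<forall>y\<in>Om (W - Q). restrict (mg Q a y) (W - Q) = y"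
      unfolding Om_def mg_def by (auto simp: fun_eq_iff PiE_def extensional_def restrict_def)
    show "(\<lambda>\<tau>. restrict \<tau> (W - Q)) ` ?S \<subseteq> Om (W - Q)"
      unfolding Om_def by auto
    show "mg Q a ` Om (W - Q) \<subseteq> ?S"
      using Q a unfolding Om_def mg_def
      by (auto simp: fun_eq_iff PiE_def extensional_def restrict_def)
  qed
  hence "card ?S = card (Om (W - Q))" by (rule bij_betw_same_card)
  also have "\<dots> = 2 ^ card (W - Q)" using W by (simp add: card_Om)
  finally have "cnt W (\<lambda>\<tau>. restrict \<tau> Q = a) = 2 ^ (card W - card Q)"
    unfolding cnt_def using W Q by (simp add: card_Diff_subset finite_subset)
  moreover have "card Q \<le> card W" using W Q by (simp add: card_mono)
  ultimately show ?thesis by (simp add: power_add[symmetric])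
qed

definition good :: "('c \<Rightarrow> ('w \<Rightarrow> bool) \<Rightarrow> bool) \<Rightarrow> 'c set \<Rightarrow> ('w \<Rightarrow> bool) \<Rightarrow> bool" where
  "good B S \<tau> \<longleftrightarrow> (\<forall>c\<in>S. \<not> B c \<tau>)"

lemma cnt_mono: "finite W \<Longrightarrow> (\<And>\<tau>. \<tau> \<in> Om W \<Longrightarrow> P \<tau> \<Longrightarrow> P' \<tau>) \<Longrightarrow> cnt W P \<le> cnt W P'"
  unfolding cnt_def by (rule card_mono) (auto simp: finite_Om)

locale lll =
  fixes W :: "'w set" and Cs :: "'c set" and B :: "'c \<Rightarrow> ('w \<Rightarrow> bool) \<Rightarrow> bool"
    and R :: "'c \<Rightarrow> 'w set" and p :: real and \<Delta> :: nat
  assumes finW: "finite W" and finC: "finite Cs"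
    and RW: "\<And>c. c \<in> Cs \<Longrightarrow> R c \<subseteq> W"
    and depB: "\<And>c. c \<in> Cs \<Longrightarrow> dep W (R c) (B c)"
    and probB: "\<And>c. c \<in> Cs \<Longrightarrow> real (cnt W (B c)) \<le> p * card (Om W)"
    and nbr: "\<And>c. c \<in> Cs \<Longrightarrow> card {c'\<in>Cs. R c' \<inter> R c \<noteq> {}} \<le> \<Delta>"
    and pD: "4 * p * \<Delta> \<le> 1" and p0: "0 \<le> p" and p4: "4 * p \<le> 1"
begin

lemma dep_good: "S \<subseteq> Cs \<Longrightarrow> (\<And>c. c \<in> S \<Longrightarrow> R c \<subseteq> T) \<Longrightarrow> dep W T (good B S)"
  unfolding dep_def good_def
proof (intro allI impI)
  fix \<tau> \<tau>' assume S: "S \<subseteq> Cs" and RT: "\<And>c. c \<in> S \<Longrightarrow> R c \<subseteq> T"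
    and t: "\<tau> \<in> Om W" "\<tau>' \<in> Om W" and e: "\<forall>u\<in>T. \<tau> u = \<tau>' u"
  have "B c \<tau> = B c \<tau>'" if "c \<in> S" for c
    using depB[of c] that S RT[OF that] t e unfolding dep_def by blast
  thus "(\<forall>c\<in>S. \<not> B c \<tau>) = (\<forall>c\<in>S. \<not> B c \<tau>')" by blast
qed

lemma Om_pos: "0 < card (Om W)"
  using finW by (simp add: card_Om)

lemma main_claim:
  "S \<subseteq> Cs \<Longrightarrow> c \<in> Cs - S \<Longrightarrow>
    real (cnt W (\<lambda>\<tau>. B c \<tau> \<and> good B S \<tau>)) \<le> 2 * p * cnt W (good B S)"
proof (induction "card S" arbitrary: S c rule: less_induct)
  case less
  note S = less.prems(1) and c = less.prems(2)
  have finS: "finite S" using S finC finite_subset by blast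
  define S1 where "S1 = {c'\<in>S. R c' \<inter> R c \<noteq> {}}"
  define S2 where "S2 = S - S1"
  have S2S: "S2 \<subseteq> S" unfolding S2_def by blast
  have dS2: "dep W (W - R c) (good B S2)"
    apply (rule dep_good)
    using S RW unfolding S2_def S1_def by blast+
  have Rc: "R c \<subseteq> W" using RW c by blast
  have ind: "cnt W (\<lambda>\<tau>. B c \<tau> \<and> good B S2 \<tau>) * card (Om W) = cnt W (B c) * cnt W (good B S2)"
    by (rule indep_cnt[OF finW Rc depB dS2]) (use c in blast)
  have "real (cnt W (\<lambda>\<tau>. B c \<tau> \<and> good B S2 \<tau>)) * card (Om W) \<le> p * card (Om W) * cnt W (good B S2)"
  proof -
    have r: "real (cnt W (\<lambda>\<tau>. B c \<tau> \<and> good B S2 \<tau>)) * card (Om W) = real (cnt W (B c)) * cnt W (good B S2)"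
      using arg_cong[OF ind, of real] by simp
    have "real (cnt W (B c)) * cnt W (good B S2) \<le> p * card (Om W) * cnt W (good B S2)"
      by (rule mult_right_mono[OF probB]) (use c in auto)
    thus ?thesis unfolding r .
  qed
  hence b1: "real (cnt W (\<lambda>\<tau>. B c \<tau> \<and> good B S2 \<tau>)) \<le> p * cnt W (good B S2)"
    using Om_pos by (simp add: mult.commute mult.left_commute)
  have b0: "cnt W (\<lambda>\<tau>. B c \<tau> \<and> good B S \<tau>) \<le> cnt W (\<lambda>\<tau>. B c \<tau> \<and> good B S2 \<tau>)"
    by (rule cnt_mono[OF finW]) (use S2S in \<open>auto simp: good_def\<close>)
  show ?case
  proof (cases "S1 = {}")
    case True
    hence "S2 = S" unfolding S2_def by blast
    have "real (cnt W (\<lambda>\<tau>. B c \<tau> \<and> good B S \<tau>)) \<le> real (cnt W (\<lambda>\<tau>. B c \<tau> \<and> good B S2 \<tau>))"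
      using b0 by linarith
    moreover have "p * cnt W (good B S2) \<le> 2 * p * cnt W (good B S2)" using p0 by simp
    ultimately show ?thesis using b1 \<open>S2 = S\<close> by simp
  next
    case False
    have S1S: "S1 \<subseteq> S" unfolding S1_def by blast
    have finS1: "finite S1" using finS S1S finite_subset by blast
    have lt: "card S2 < card S" unfolding S2_def using False S1S finS
      by (intro psubset_card_mono) auto
    have IH: "real (cnt W (\<lambda>\<tau>. B c' \<tau> \<and> good B S2 \<tau>)) \<le> 2 * p * cnt W (good B S2)"
      if "c' \<in> S1" for c'
      using less.hyps[OF lt, of c'] S S1S S2S that unfolding S2_def by blast
    have cover: "{\<tau> \<in> Om W. good B S2 \<tau>} \<subseteq> {\<tau> \<in> Om W. good B S \<tau>} \<union> (\<Union>c'\<in>S1. {\<tau> \<in> Om W. B c' \<tau> \<and> good B S2 \<tau>})"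
      unfolding good_def S2_def by blast
    have "cnt W (good B S2) \<le> card ({\<tau> \<in> Om W. good B S \<tau>} \<union> (\<Union>c'\<in>S1. {\<tau> \<in> Om W. B c' \<tau> \<and> good B S2 \<tau>}))"
      unfolding cnt_def by (rule card_mono[OF _ cover]) (simp add: finite_Om[OF finW] finS1)
    also have "\<dots> \<le> cnt W (good B S) + card (\<Union>c'\<in>S1. {\<tau> \<in> Om W. B c' \<tau> \<and> good B S2 \<tau>})"
      unfolding cnt_def by (rule card_Un_le)
    also have "\<dots> \<le> cnt W (good B S) + (\<Sum>c'\<in>S1. cnt W (\<lambda>\<tau>. B c' \<tau> \<and> good B S2 \<tau>))"
      unfolding cnt_def by (simp add: card_UN_le finS1)
    finally have "real (cnt W (good B S2)) \<le> real (cnt W (good B S) + (\<Sum>c'\<in>S1. cnt W (\<lambda>\<tau>. B c' \<tau> \<and> good B S2 \<tau>)))"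
      by (simp only: of_nat_le_iff)
    also have "\<dots> = cnt W (good B S) + (\<Sum>c'\<in>S1. real (cnt W (\<lambda>\<tau>. B c' \<tau> \<and> good B S2 \<tau>)))"
      by simp
    also have "\<dots> \<le> cnt W (good B S) + (\<Sum>c'\<in>S1. 2 * p * cnt W (good B S2))"
      using IH by (intro add_left_mono sum_mono) auto
    also have "\<dots> = cnt W (good B S) + card S1 * (2 * p) * cnt W (good B S2)" by simp
    also have "\<dots> \<le> cnt W (good B S) + (1/2) * cnt W (good B S2)"
    proof -
      have "card S1 \<le> \<Delta>"
      proof -
        have "S1 \<subseteq> {c'\<in>Cs. R c' \<inter> R c \<noteq> {}}" unfolding S1_def using S by blast
        hence "card S1 \<le> card {c'\<in>Cs. R c' \<inter> R c \<noteq> {}}" using finC by (simp add: card_mono)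
        thus ?thesis using nbr[of c] c by simp
      qed
      hence "real (card S1) * (2 * p) \<le> real \<Delta> * (2 * p)" using p0
        by (intro mult_right_mono) auto
      moreover have "real \<Delta> * (2 * p) = (4 * p * real \<Delta>) / 2" by simp
      ultimately have "real (card S1) * (2 * p) \<le> 1/2" using pD by linarith
      thus ?thesis by (intro add_left_mono mult_right_mono) auto
    qed
    finally have "real (cnt W (good B S2)) \<le> 2 * cnt W (good B S)" by simp
    hence "p * cnt W (good B S2) \<le> p * (2 * cnt W (good B S))" using p0 by (rule mult_left_mono)
    moreover have "real (cnt W (\<lambda>\<tau>. B c \<tau> \<and> good B S \<tau>)) \<le> real (cnt W (\<lambda>\<tau>. B c \<tau> \<and> good B S2 \<tau>))"
      using b0 by linarith
    ultimately show ?thesis using b1 by linarith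
  qed
qed

lemma chain:
  assumes S: "S \<subseteq> Cs" and T: "T \<subseteq> Cs - S"
  shows "(1 - 2 * p) ^ card T * cnt W (good B S) \<le> cnt W (good B (S \<union> T))"
proof -
  have finT: "finite T" using T finC finite_subset by blast
  show ?thesis using finT T
  proof (induction T rule: finite_induct)
    case empty thus ?case by simp
  next
    case (insert c T)
    have IH: "(1 - 2 * p) ^ card T * cnt W (good B S) \<le> cnt W (good B (S \<union> T))"
      using insert by blast
    have cl: "real (cnt W (\<lambda>\<tau>. B c \<tau> \<and> good B (S \<union> T) \<tau>)) \<le> 2 * p * cnt W (good B (S \<union> T))"
      by (rule main_claim) (use insert S in auto)
    have split: "cnt W (good B (S \<union> T)) = cnt W (good B (S \<union> insert c T)) + cnt W (\<lambda>\<tau>. B c \<tau> \<and> good B (S \<union> T) \<tau>)"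
    proof -
      have "{\<tau> \<in> Om W. good B (S \<union> T) \<tau>} = {\<tau> \<in> Om W. good B (S \<union> insert c T) \<tau>} \<union> {\<tau> \<in> Om W. B c \<tau> \<and> good B (S \<union> T) \<tau>}"
        unfolding good_def by blast
      moreover have "{\<tau> \<in> Om W. good B (S \<union> insert c T) \<tau>} \<inter> {\<tau> \<in> Om W. B c \<tau> \<and> good B (S \<union> T) \<tau>} = {}"
        unfolding good_def by blast
      ultimately show ?thesis unfolding cnt_def
        by (simp add: card_Un_disjoint finite_Om[OF finW])
    qed
    have "(1 - 2 * p) ^ card (insert c T) * cnt W (good B S) = (1 - 2*p) * ((1 - 2 * p) ^ card T * cnt W (good B S))"
      using insert by simp
    also have "\<dots> \<le> (1 - 2*p) * cnt W (good B (S \<union> T))"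
      using IH p4 by (intro mult_left_mono) auto
    also have "\<dots> \<le> cnt W (good B (S \<union> insert c T))"
      using split cl by (simp add: algebra_simps)
    finally show ?case .
  qed
qed

lemma good_pos: "S \<subseteq> Cs \<Longrightarrow> 0 < cnt W (good B S)"
proof -
  assume S: "S \<subseteq> Cs"
  have "(1 - 2 * p) ^ card S * cnt W (good B {}) \<le> cnt W (good B ({} \<union> S))"
    by (rule chain) (use S in auto)
  moreover have "cnt W (good B {}) = card (Om W)" unfolding cnt_def good_def by simp
  moreover have "0 < (1 - 2 * p) ^ card S * card (Om W)" using p4 Om_pos by simp
  ultimately show ?thesis by simp
qed

lemma hss:
  assumes Q: "Q \<subseteq> W" and a: "a \<in> Q \<rightarrow>\<^sub>E (UNIV::bool set)"
  shows "real (cnt W (\<lambda>\<tau>. restrict \<tau> Q = a \<and> good B Cs \<tau>)) * (1 - 2 * p) ^ card {c\<in>Cs. R c \<inter> Q \<noteq> {}}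
         \<le> (1/2) ^ card Q * cnt W (good B Cs)"
proof -
  define D1 where "D1 = {c\<in>Cs. R c \<inter> Q \<noteq> {}}"
  define D2 where "D2 = Cs - D1"
  have dE: "dep W Q (\<lambda>\<tau>. restrict \<tau> Q = a)" unfolding dep_def by (auto simp: restrict_def fun_eq_iff)
  have dD2: "dep W (W - Q) (good B D2)"
    by (rule dep_good) (use RW in \<open>auto simp: D2_def D1_def\<close>)
  have ind: "cnt W (\<lambda>\<tau>. restrict \<tau> Q = a \<and> good B D2 \<tau>) * card (Om W) = cnt W (\<lambda>\<tau>. restrict \<tau> Q = a) * cnt W (good B D2)"
    by (rule indep_cnt[OF finW Q dE dD2])
  have fx: "cnt W (\<lambda>\<tau>. restrict \<tau> Q = a) * 2 ^ card Q = 2 ^ card W" by (rule cnt_fix[OF finW Q a])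
  have e1: "real (cnt W (\<lambda>\<tau>. restrict \<tau> Q = a \<and> good B D2 \<tau>)) = (1/2) ^ card Q * cnt W (good B D2)"
  proof -
    have "real (cnt W (\<lambda>\<tau>. restrict \<tau> Q = a \<and> good B D2 \<tau>)) * 2 ^ card W * 2 ^ card Q
        = real (cnt W (\<lambda>\<tau>. restrict \<tau> Q = a)) * 2 ^ card Q * cnt W (good B D2)"
      using arg_cong[OF ind, of real] card_Om[OF finW] by (simp add: algebra_simps)
    also have "\<dots> = 2 ^ card W * cnt W (good B D2)" using arg_cong[OF fx, of real] by simp
    finally show ?thesis by (simp add: field_simps power_one_over)
  qed
  have e0: "cnt W (\<lambda>\<tau>. restrict \<tau> Q = a \<and> good B Cs \<tau>) \<le> cnt W (\<lambda>\<tau>. restrict \<tau> Q = a \<and> good B D2 \<tau>)"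
    by (rule cnt_mono[OF finW]) (auto simp: good_def D2_def)
  have ch: "(1 - 2 * p) ^ card D1 * cnt W (good B D2) \<le> cnt W (good B (D2 \<union> D1))"
    by (rule chain) (auto simp: D1_def D2_def)
  have "D2 \<union> D1 = Cs" unfolding D1_def D2_def by blast
  hence ch': "(1 - 2 * p) ^ card D1 * cnt W (good B D2) \<le> cnt W (good B Cs)" using ch by simp
  have pp: "0 \<le> (1 - 2 * p) ^ card D1" using p4 by simp
  have "real (cnt W (\<lambda>\<tau>. restrict \<tau> Q = a \<and> good B Cs \<tau>)) * (1 - 2 * p) ^ card D1
      \<le> (1/2) ^ card Q * cnt W (good B D2) * (1 - 2 * p) ^ card D1"
  proof -
    have "real (cnt W (\<lambda>\<tau>. restrict \<tau> Q = a \<and> good B Cs \<tau>)) \<le> real (cnt W (\<lambda>\<tau>. restrict \<tau> Q = a \<and> good B D2 \<tau>))"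
      using e0 by linarith
    from mult_right_mono[OF this pp] show ?thesis unfolding e1 .
  qed
  also have "\<dots> \<le> (1/2) ^ card Q * cnt W (good B Cs)"
  proof -
    have "(1/2::real) ^ card Q * cnt W (good B D2) * (1 - 2 * p) ^ card D1 = (1/2) ^ card Q * ((1 - 2 * p) ^ card D1 * cnt W (good B D2))"
      by simp
    also have "\<dots> \<le> (1/2) ^ card Q * cnt W (good B Cs)"
      by (rule mult_left_mono[OF ch']) simp
    finally show ?thesis .
  qed
  finally show ?thesis unfolding D1_def .
qed

end


definition csat :: "'v clause \<Rightarrow> ('v \<Rightarrow> bool) \<Rightarrow> bool" where
  "csat c \<omega> \<longleftrightarrow> (\<exists>(u, b)\<in>c. \<omega> u = b)"

lemma satisfies_csat: "satisfies \<omega> C \<longleftrightarrow> (\<forall>c\<in>C. csat c \<omega>)"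
  unfolding satisfies_def csat_def by blast

definition ext :: "'v set \<Rightarrow> 'v clause set \<Rightarrow> 'v set \<Rightarrow> ('v \<Rightarrow> bool) \<Rightarrow> ('v \<Rightarrow> bool) set" where
  "ext V C A \<sigma> = {\<omega> \<in> sat_assignments V C. restrict \<omega> A = \<sigma>}"

locale formula =
  fixes V :: "'v set" and C :: "'v clause set" and M :: "'v set" and k d k\<beta> :: nat
  assumes cnf: "cnf_formula V C" and unif: "k_uniform k C" and deg: "max_degree_le V C d"
    and MV: "M \<subseteq> V" and kb: "\<And>c. c \<in> C \<Longrightarrow> k\<beta> \<le> card (clause_vars c - M)"
    and kb1: "1 \<le> k\<beta>" and d1: "1 \<le> d" and k1: "1 \<le> k"
    and num: "2 ^ 16 * d ^ 9 * k ^ 9 \<le> (2::nat) ^ k\<beta>"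
begin

definition p :: real where "p = (1/2) ^ k\<beta>"

lemma finV: "finite V" using cnf unfolding cnf_formula_def by blast
lemma finC: "finite C" using cnf unfolding cnf_formula_def by blast
lemma varsV: "c \<in> C \<Longrightarrow> clause_vars c \<subseteq> V" using cnf unfolding cnf_formula_def clause_vars_def by blast
lemma finc: "c \<in> C \<Longrightarrow> finite c" using cnf unfolding cnf_formula_def by blast
lemma card_vars: "c \<in> C \<Longrightarrow> card (clause_vars c) = k" using unif unfolding k_uniform_def clause_vars_def by blast

lemma p0: "0 \<le> p" unfolding p_def by simp

lemma pkd: "4 * p * real (k * d) \<le> 1"
proof -
  have "d * k \<le> d ^ 9 * k ^ 9"
    using d1 k1 by (intro mult_mono) (auto simp: self_le_power)
  hence "4 * (k * d) \<le> 2 ^ 16 * d ^ 9 * k ^ 9" by (simp add: mult.commute)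
  hence "4 * (k * d) \<le> (2::nat) ^ k\<beta>" using num by linarith
  hence "real (4 * (k * d)) \<le> 2 ^ k\<beta>" by (metis of_nat_le_iff of_nat_numeral of_nat_power)
  thus ?thesis unfolding p_def by (simp add: field_simps power_one_over)
qed

lemma p4: "4 * p \<le> 1"
proof -
  have "1 \<le> k * d" using d1 k1 by (simp add: one_le_mult_iff)
  hence "1 \<le> real (k * d)" by (metis of_nat_1 of_nat_le_iff)
  hence "4 * p * 1 \<le> 4 * p * real (k * d)" using p0 by (intro mult_left_mono) auto
  thus ?thesis using pkd by simp
qed

lemma deg_le: "u \<in> V \<Longrightarrow> card {c\<in>C. u \<in> clause_vars c} \<le> d"
  using deg unfolding max_degree_le_def by blast

lemma touch_card:
  assumes Q: "Q \<subseteq> V" and RR: "\<And>c. RR c \<subseteq> clause_vars c"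
  shows "card {c\<in>C. RR c \<inter> Q \<noteq> {}} \<le> d * card Q"
proof -
  have finQ: "finite Q" using Q finV finite_subset by blast
  have "{c\<in>C. RR c \<inter> Q \<noteq> {}} \<subseteq> (\<Union>u\<in>Q. {c\<in>C. u \<in> clause_vars c})" using RR by blast
  hence "card {c\<in>C. RR c \<inter> Q \<noteq> {}} \<le> card (\<Union>u\<in>Q. {c\<in>C. u \<in> clause_vars c})"
    using finC finQ by (intro card_mono) auto
  also have "\<dots> \<le> (\<Sum>u\<in>Q. card {c\<in>C. u \<in> clause_vars c})" by (rule card_UN_le[OF finQ])
  also have "\<dots> \<le> (\<Sum>u\<in>Q. d)" using Q deg_le by (intro sum_mono) auto
  finally show ?thesis by (simp add: mult.commute)
qed

context
  fixes A :: "'v set" and \<sigma> :: "'v \<Rightarrow> bool"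
  assumes AM: "A \<subseteq> M" and \<sigma>A: "\<sigma> \<in> A \<rightarrow>\<^sub>E (UNIV :: bool set)"
begin

definition BB :: "'v clause \<Rightarrow> ('v \<Rightarrow> bool) \<Rightarrow> bool" where
  "BB c \<tau> \<longleftrightarrow> \<not> csat c (mg A \<sigma> \<tau>)"

definition RR :: "'v clause \<Rightarrow> 'v set" where
  "RR c = clause_vars c - A"

lemma AV: "A \<subseteq> V" using AM MV by blast

lemma inst: "lll (V - A) C BB RR p (k * d)"
proof
  show "finite (V - A)" using finV by simp
  show "finite C" by (rule finC)
  show "RR c \<subseteq> V - A" if "c \<in> C" for c using varsV[OF that] unfolding RR_def by blast
  show "dep (V - A) (RR c) (BB c)" if "c \<in> C" for c
    unfolding dep_def BB_def
  proof (intro allI impI)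
    fix \<tau> \<tau>' :: "'v \<Rightarrow> bool" assume e: "\<forall>u\<in>RR c. \<tau> u = \<tau>' u"
    hence "\<forall>u\<in>clause_vars c. mg A \<sigma> \<tau> u = mg A \<sigma> \<tau>' u" unfolding RR_def mg_def by auto
    thus "(\<not> csat c (mg A \<sigma> \<tau>)) = (\<not> csat c (mg A \<sigma> \<tau>'))"
      unfolding csat_def clause_vars_def by force
  qed
  show "real (cnt (V - A) (BB c)) \<le> p * card (Om (V - A))" if c: "c \<in> C" for c
  proof -
    define a0 where "a0 = (\<lambda>u\<in>RR c. \<not> (SOME b. (u, b) \<in> c))"
    have RW: "RR c \<subseteq> V - A" using varsV[OF c] unfolding RR_def by blast
    have a0: "a0 \<in> RR c \<rightarrow>\<^sub>E (UNIV :: bool set)" unfolding a0_def by simp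
    have imp: "restrict \<tau> (RR c) = a0" if "BB c \<tau>" for \<tau>
    proof
      fix u show "restrict \<tau> (RR c) u = a0 u"
      proof (cases "u \<in> RR c")
        case True
        then obtain b where ub: "(u, b) \<in> c" unfolding RR_def clause_vars_def by auto
        hence sb: "(u, SOME b. (u, b) \<in> c) \<in> c" by (rule someI)
        have "u \<notin> A" using True unfolding RR_def by blast
        hence "mg A \<sigma> \<tau> u = \<tau> u" unfolding mg_def by simp
        hence "\<tau> u \<noteq> (SOME b. (u, b) \<in> c)" using that sb unfolding BB_def csat_def by force
        thus ?thesis using True unfolding a0_def by simp
      next
        case False thus ?thesis unfolding a0_def by simp
      qed
    qed
    have "cnt (V - A) (BB c) \<le> cnt (V - A) (\<lambda>\<tau>. restrict \<tau> (RR c) = a0)"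
      using finV imp by (intro cnt_mono) auto
    moreover have fx: "cnt (V - A) (\<lambda>\<tau>. restrict \<tau> (RR c) = a0) * 2 ^ card (RR c) = 2 ^ card (V - A)"
      using finV RW a0 by (intro cnt_fix) auto
    moreover have "k\<beta> \<le> card (RR c)"
    proof -
      have "clause_vars c - M \<subseteq> RR c" unfolding RR_def using AM by blast
      moreover have "finite (RR c)" using RW finV finite_subset by blast
      ultimately show ?thesis using kb[OF c] card_mono order_trans by blast
    qed
    ultimately have "real (cnt (V - A) (BB c)) * 2 ^ card (RR c) \<le> 2 ^ card (V - A)"
      by (metis (mono_tags, lifting) mult_le_mono1 of_nat_le_iff of_nat_mult of_nat_numeral of_nat_power)
    hence "real (cnt (V - A) (BB c)) \<le> 2 ^ card (V - A) / 2 ^ card (RR c)"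
      by (simp add: field_simps)
    also have "\<dots> = (1/2) ^ card (RR c) * 2 ^ card (V - A)" by (simp add: field_simps power_one_over)
    also have "\<dots> \<le> p * 2 ^ card (V - A)" unfolding p_def
      by (intro mult_right_mono power_decreasing \<open>k\<beta> \<le> card (RR c)\<close>) auto
    finally show ?thesis using finV by (simp add: card_Om)
  qed
  show "card {c' \<in> C. RR c' \<inter> RR c \<noteq> {}} \<le> k * d" if c: "c \<in> C" for c
  proof -
    have "card {c' \<in> C. RR c' \<inter> clause_vars c \<noteq> {}} \<le> d * card (clause_vars c)"
      by (rule touch_card[OF varsV[OF c]]) (auto simp: RR_def)
    moreover have "{c' \<in> C. RR c' \<inter> RR c \<noteq> {}} \<subseteq> {c' \<in> C. RR c' \<inter> clause_vars c \<noteq> {}}"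
      unfolding RR_def by blast
    hence "card {c' \<in> C. RR c' \<inter> RR c \<noteq> {}} \<le> card {c' \<in> C. RR c' \<inter> clause_vars c \<noteq> {}}"
      using finC by (intro card_mono) auto
    ultimately show ?thesis using card_vars[OF c] by (simp add: mult.commute)
  qed
  show "4 * p * real (k * d) \<le> 1" by (rule pkd)
  show "0 \<le> p" by (rule p0)
  show "4 * p \<le> 1" by (rule p4)
qed

lemma transfer:
  "bij_betw (\<lambda>\<omega>. restrict \<omega> (V - A)) {\<omega> \<in> ext V C A \<sigma>. P \<omega>}
      {\<tau> \<in> Om (V - A). P (mg A \<sigma> \<tau>) \<and> good BB C \<tau>}"
proof (rule bij_betw_byWitness[where f'="mg A \<sigma>"])
  have bk: "mg A \<sigma> (restrict \<omega> (V - A)) = \<omega>" if "\<omega> \<in> ext V C A \<sigma>" for \<omega>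
  proof
    fix u
    have w: "\<omega> \<in> V \<rightarrow>\<^sub>E UNIV" "restrict \<omega> A = \<sigma>" using that unfolding ext_def sat_assignments_def by auto
    show "mg A \<sigma> (restrict \<omega> (V - A)) u = \<omega> u"
    proof (cases "u \<in> A")
      case True
      have "\<sigma> u = \<omega> u" using w(2) True by (metis restrict_apply')
      thus ?thesis using True unfolding mg_def by simp
    next
      case False thus ?thesis using w(1) unfolding mg_def by (auto simp: PiE_def extensional_def)
    qed
  qed
  show "\<forall>a\<in>{\<omega> \<in> ext V C A \<sigma>. P \<omega>}. mg A \<sigma> (restrict a (V - A)) = a" using bk by blast
  have mgin: "mg A \<sigma> \<tau> \<in> V \<rightarrow>\<^sub>E UNIV" "restrict (mg A \<sigma> \<tau>) A = \<sigma>" if "\<tau> \<in> Om (V - A)" for \<tau>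
    using that \<sigma>A AV unfolding Om_def mg_def by (auto simp: PiE_def extensional_def fun_eq_iff)
  show "\<forall>a'\<in>{\<tau> \<in> Om (V - A). P (mg A \<sigma> \<tau>) \<and> good BB C \<tau>}. restrict (mg A \<sigma> a') (V - A) = a'"
    unfolding Om_def mg_def by (auto simp: PiE_def extensional_def fun_eq_iff)
  show "(\<lambda>\<omega>. restrict \<omega> (V - A)) ` {\<omega> \<in> ext V C A \<sigma>. P \<omega>} \<subseteq> {\<tau> \<in> Om (V - A). P (mg A \<sigma> \<tau>) \<and> good BB C \<tau>}"
  proof
    fix x assume "x \<in> (\<lambda>\<omega>. restrict \<omega> (V - A)) ` {\<omega> \<in> ext V C A \<sigma>. P \<omega>}"
    then obtain \<omega> where o: "\<omega> \<in> ext V C A \<sigma>" "P \<omega>" and x: "x = restrict \<omega> (V - A)" by blast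
    have "x \<in> Om (V - A)" unfolding x Om_def by simp
    moreover have "mg A \<sigma> x = \<omega>" using bk[OF o(1)] x by simp
    moreover have "satisfies \<omega> C" using o(1) unfolding ext_def sat_assignments_def by blast
    ultimately show "x \<in> {\<tau> \<in> Om (V - A). P (mg A \<sigma> \<tau>) \<and> good BB C \<tau>}"
      using o(2) unfolding good_def BB_def satisfies_csat by auto
  qed
  show "mg A \<sigma> ` {\<tau> \<in> Om (V - A). P (mg A \<sigma> \<tau>) \<and> good BB C \<tau>} \<subseteq> {\<omega> \<in> ext V C A \<sigma>. P \<omega>}"
    using mgin unfolding ext_def sat_assignments_def good_def BB_def satisfies_csat by auto
qed

lemma card_transfer: "card {\<omega> \<in> ext V C A \<sigma>. P \<omega>} = cnt (V - A) (\<lambda>\<tau>. P (mg A \<sigma> \<tau>) \<and> good BB C \<tau>)"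
  unfolding cnt_def using bij_betw_same_card[OF transfer] .

lemma ext_pos: "0 < card (ext V C A \<sigma>)"
proof -
  have "card {\<omega> \<in> ext V C A \<sigma>. True} = cnt (V - A) (\<lambda>\<tau>. True \<and> good BB C \<tau>)" by (rule card_transfer)
  moreover have "0 < cnt (V - A) (good BB C)" by (rule lll.good_pos[OF inst]) simp
  ultimately show ?thesis by simp
qed

lemma ext_hss:
  assumes Q: "Q \<subseteq> V - M" and a: "a \<in> Q \<rightarrow>\<^sub>E (UNIV :: bool set)"
  shows "real (card {\<omega> \<in> ext V C A \<sigma>. restrict \<omega> Q = a}) * (1 - 2 * p) ^ (d * card Q)
     \<le> (1/2) ^ card Q * card (ext V C A \<sigma>)"
proof -
  have QW: "Q \<subseteq> V - A" using Q AM by blast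
  have h: "real (cnt (V - A) (\<lambda>\<tau>. restrict \<tau> Q = a \<and> good BB C \<tau>)) * (1 - 2 * p) ^ card {c\<in>C. RR c \<inter> Q \<noteq> {}}
         \<le> (1/2) ^ card Q * cnt (V - A) (good BB C)"
    by (rule lll.hss[OF inst QW a])
  have e1: "card {\<omega> \<in> ext V C A \<sigma>. restrict \<omega> Q = a} = cnt (V - A) (\<lambda>\<tau>. restrict \<tau> Q = a \<and> good BB C \<tau>)"
  proof -
    have "card {\<omega> \<in> ext V C A \<sigma>. restrict \<omega> Q = a} = cnt (V - A) (\<lambda>\<tau>. restrict (mg A \<sigma> \<tau>) Q = a \<and> good BB C \<tau>)"
      by (rule card_transfer)
    moreover have "restrict (mg A \<sigma> \<tau>) Q = restrict \<tau> Q" for \<tau>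
      using QW unfolding mg_def by (auto simp: restrict_def fun_eq_iff)
    ultimately show ?thesis by simp
  qed
  have e2: "card (ext V C A \<sigma>) = cnt (V - A) (good BB C)"
    using card_transfer[of "\<lambda>_. True"] by simp
  have N: "card {c\<in>C. RR c \<inter> Q \<noteq> {}} \<le> d * card Q"
    by (rule touch_card) (use Q in \<open>auto simp: RR_def\<close>)
  have "(1 - 2 * p) ^ (d * card Q) \<le> (1 - 2 * p) ^ card {c\<in>C. RR c \<inter> Q \<noteq> {}}"
    using p4 p0 N by (intro power_decreasing) auto
  hence "real (card {\<omega> \<in> ext V C A \<sigma>. restrict \<omega> Q = a}) * (1 - 2 * p) ^ (d * card Q)
     \<le> real (card {\<omega> \<in> ext V C A \<sigma>. restrict \<omega> Q = a}) * (1 - 2 * p) ^ card {c\<in>C. RR c \<inter> Q \<noteq> {}}"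
    by (intro mult_left_mono) auto
  thus ?thesis using h e1 e2 by simp
qed

end

end


definition unsafe :: "'v clause \<Rightarrow> ('v \<Rightarrow> bool) \<Rightarrow> ('v \<Rightarrow> bool) \<Rightarrow> bool" where
  "unsafe c \<omega> \<omega>' \<longleftrightarrow> (\<forall>(u, b)\<in>c. \<not> (\<omega> u = b \<and> \<omega>' u = b))"

definition link :: "'v clause set \<Rightarrow> ('v \<Rightarrow> bool) \<Rightarrow> ('v \<Rightarrow> bool) \<Rightarrow> ('v \<times> 'v) set" where
  "link C \<omega> \<omega>' = {(u, w). \<exists>c\<in>C. unsafe c \<omega> \<omega>' \<and> u \<in> clause_vars c \<and> w \<in> clause_vars c}"

definition Kset :: "'v clause set \<Rightarrow> 'v \<Rightarrow> ('v \<Rightarrow> bool) \<Rightarrow> ('v \<Rightarrow> bool) \<Rightarrow> 'v set" where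
  "Kset C j \<omega> \<omega>' = {w. (j, w) \<in> (link C \<omega> \<omega>')\<^sup>*}"

definition swp :: "'v clause set \<Rightarrow> 'v \<Rightarrow> ('v \<Rightarrow> bool) \<times> ('v \<Rightarrow> bool) \<Rightarrow> ('v \<Rightarrow> bool) \<times> ('v \<Rightarrow> bool)" where
  "swp C j pr = (let K = Kset C j (fst pr) (snd pr) in (mg K (fst pr) (snd pr), mg K (snd pr) (fst pr)))"

lemma unsafe_mg: "unsafe c (mg K \<omega> \<omega>') (mg K \<omega>' \<omega>) = unsafe c \<omega> \<omega>'"
proof -
  have "\<And>u b. (mg K \<omega> \<omega>' u = b \<and> mg K \<omega>' \<omega> u = b) = (\<omega> u = b \<and> \<omega>' u = b)"
    unfolding mg_def by auto
  thus ?thesis unfolding unsafe_def by simp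
qed

lemma unsafe_sym: "unsafe c \<omega>' \<omega> = unsafe c \<omega> \<omega>'"
  unfolding unsafe_def by auto

lemma link_mg: "link C (mg K \<omega> \<omega>') (mg K \<omega>' \<omega>) = link C \<omega> \<omega>'"
  unfolding link_def unsafe_mg ..

lemma Kset_mg: "Kset C j (mg K \<omega> \<omega>') (mg K \<omega>' \<omega>) = Kset C j \<omega> \<omega>'"
  unfolding Kset_def link_mg ..

lemma swp_swp: "swp C j (swp C j pr) = pr"
proof -
  obtain \<omega> \<omega>' where pe: "pr = (\<omega>, \<omega>')" by (cases pr)
  let ?K = "Kset C j \<omega> \<omega>'"
  have s1: "swp C j pr = (mg ?K \<omega> \<omega>', mg ?K \<omega>' \<omega>)" unfolding swp_def pe Let_def by simp
  have "swp C j (mg ?K \<omega> \<omega>', mg ?K \<omega>' \<omega>) = (mg ?K (mg ?K \<omega> \<omega>') (mg ?K \<omega>' \<omega>), mg ?K (mg ?K \<omega>' \<omega>) (mg ?K \<omega> \<omega>'))"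
    by (simp add: swp_def Kset_mg Let_def)
  hence "swp C j (swp C j pr) = (mg ?K (mg ?K \<omega> \<omega>') (mg ?K \<omega>' \<omega>), mg ?K (mg ?K \<omega>' \<omega>) (mg ?K \<omega> \<omega>'))"
    unfolding s1 .
  also have "\<dots> = pr" unfolding pe by (simp add: mg_def fun_eq_iff)
  finally show ?thesis .
qed

lemma Kset_j: "j \<in> Kset C j \<omega> \<omega>'" unfolding Kset_def by simp

lemma Kset_closed:
  assumes c: "c \<in> C" "unsafe c \<omega> \<omega>'" and u: "u \<in> clause_vars c" "u \<in> Kset C j \<omega> \<omega>'"
  shows "clause_vars c \<subseteq> Kset C j \<omega> \<omega>'"
proof
  fix w assume w: "w \<in> clause_vars c"
  have "(u, w) \<in> link C \<omega> \<omega>'" unfolding link_def using c u(1) w by blast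
  thus "w \<in> Kset C j \<omega> \<omega>'" using u(2) unfolding Kset_def by (simp add: rtrancl_into_rtrancl)
qed

lemma mg_sat:
  assumes s: "satisfies \<omega> C" "satisfies \<omega>' C"
    and cl: "\<And>c. c \<in> C \<Longrightarrow> unsafe c \<omega> \<omega>' \<Longrightarrow> clause_vars c \<subseteq> K \<or> clause_vars c \<inter> K = {}"
  shows "satisfies (mg K \<omega> \<omega>') C"
  unfolding satisfies_csat
proof
  fix c assume c: "c \<in> C"
  show "csat c (mg K \<omega> \<omega>')"
  proof (cases "unsafe c \<omega> \<omega>'")
    case False
    then obtain u b where ub: "(u, b) \<in> c" "\<omega> u = b" "\<omega>' u = b" unfolding unsafe_def by blast
    hence "mg K \<omega> \<omega>' u = b" by (simp add: mg_def)
    thus ?thesis unfolding csat_def using ub(1) by blast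
  next
    case True
    from cl[OF c True] show ?thesis
    proof
      assume sub: "clause_vars c \<subseteq> K"
      obtain u b where ub: "(u, b) \<in> c" "\<omega> u = b" using s(1) c unfolding satisfies_csat csat_def by blast
      moreover have "u \<in> K" using sub ub(1) unfolding clause_vars_def by force
      ultimately have "mg K \<omega> \<omega>' u = b" by (simp add: mg_def)
      thus ?thesis unfolding csat_def using ub(1) by blast
    next
      assume dis: "clause_vars c \<inter> K = {}"
      obtain u b where ub: "(u, b) \<in> c" "\<omega>' u = b" using s(2) c unfolding satisfies_csat csat_def by blast
      moreover have "u \<notin> K" using dis ub(1) unfolding clause_vars_def by force
      ultimately have "mg K \<omega> \<omega>' u = b" by (simp add: mg_def)
      thus ?thesis unfolding csat_def using ub(1) by blast
    qed
  qed
qed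

lemma mg_sat_K:
  assumes s: "satisfies \<omega> C" "satisfies \<omega>' C"
  shows "satisfies (mg (Kset C j \<omega> \<omega>') \<omega> \<omega>') C" "satisfies (mg (Kset C j \<omega> \<omega>') \<omega>' \<omega>) C"
proof -
  have cl: "clause_vars c \<subseteq> Kset C j \<omega> \<omega>' \<or> clause_vars c \<inter> Kset C j \<omega> \<omega>' = {}"
    if "c \<in> C" "unsafe c \<omega> \<omega>'" for c
  proof (cases "clause_vars c \<inter> Kset C j \<omega> \<omega>' = {}")
    case False
    then obtain u where "u \<in> clause_vars c" "u \<in> Kset C j \<omega> \<omega>'" by blast
    from Kset_closed[OF that this] show ?thesis by blast
  qed simp
  show "satisfies (mg (Kset C j \<omega> \<omega>') \<omega> \<omega>') C" by (rule mg_sat[OF s cl])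
  have cl': "clause_vars c \<subseteq> Kset C j \<omega> \<omega>' \<or> clause_vars c \<inter> Kset C j \<omega> \<omega>' = {}"
    if "c \<in> C" "unsafe c \<omega>' \<omega>" for c
    using cl[OF that(1)] that(2) unsafe_sym by metis
  show "satisfies (mg (Kset C j \<omega> \<omega>') \<omega>' \<omega>) C" by (rule mg_sat[OF s(2,1) cl'])
qed

lemma swap_bound:
  fixes V :: "'v set" and A :: "'v set" and C :: "'v clause set"
  assumes AV: "A \<subseteq> V" and s1: "\<sigma>1 \<in> A \<rightarrow>\<^sub>E (UNIV::bool set)" and s0: "\<sigma>0 \<in> A \<rightarrow>\<^sub>E (UNIV::bool set)"
    and agree: "\<And>u. u \<in> A \<Longrightarrow> u \<noteq> j \<Longrightarrow> \<sigma>1 u = \<sigma>0 u" and finV: "finite V"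
  defines "S1 \<equiv> ext V C A \<sigma>1" and "S0 \<equiv> ext V C A \<sigma>0"
  shows "\<bar>real (card S0 * card {\<omega>\<in>S1. \<omega> v}) - real (card S1 * card {\<omega>\<in>S0. \<omega> v})\<bar>
          \<le> card {pr \<in> S1 \<times> S0. v \<in> Kset C j (fst pr) (snd pr)}"
proof -
  let ?P = "S1 \<times> S0"
  have "S1 \<subseteq> V \<rightarrow>\<^sub>E UNIV" "S0 \<subseteq> V \<rightarrow>\<^sub>E UNIV"
    unfolding S1_def S0_def ext_def sat_assignments_def by auto
  hence finS: "finite S1" "finite S0" using finite_PiE[OF finV, of "\<lambda>_. UNIV :: bool set"]
    by (auto intro: finite_subset)
  have finP: "finite ?P" using finS by simp
  have into: "swp C j pr \<in> ?P" if pr: "pr \<in> ?P" for pr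
  proof -
    obtain \<omega> \<omega>' where pe: "pr = (\<omega>, \<omega>')" by (cases pr)
    have o: "\<omega> \<in> V \<rightarrow>\<^sub>E UNIV" "satisfies \<omega> C" "restrict \<omega> A = \<sigma>1"
      using pr pe unfolding S1_def ext_def sat_assignments_def by auto
    have o': "\<omega>' \<in> V \<rightarrow>\<^sub>E UNIV" "satisfies \<omega>' C" "restrict \<omega>' A = \<sigma>0"
      using pr pe unfolding S0_def ext_def sat_assignments_def by auto
    let ?K = "Kset C j \<omega> \<omega>'"
    have jK: "j \<in> ?K" by (rule Kset_j)
    have ag: "\<omega> u = \<omega>' u" if "u \<in> A" "u \<noteq> j" for u
      using agree[OF that] o(3) o'(3) that(1) by (metis restrict_apply')
    have m1: "mg ?K \<omega> \<omega>' \<in> V \<rightarrow>\<^sub>E UNIV" "mg ?K \<omega>' \<omega> \<in> V \<rightarrow>\<^sub>E UNIV"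
      using o(1) o'(1) unfolding mg_def by (auto simp: PiE_def extensional_def)
    have r1: "restrict (mg ?K \<omega> \<omega>') A = \<sigma>1"
    proof
      fix u show "restrict (mg ?K \<omega> \<omega>') A u = \<sigma>1 u"
        using o(3) ag[of u] jK unfolding mg_def
        by (cases "u \<in> A"; cases "u = j") (auto simp: restrict_def fun_eq_iff split: if_splits)
    qed
    have r0: "restrict (mg ?K \<omega>' \<omega>) A = \<sigma>0"
    proof
      fix u show "restrict (mg ?K \<omega>' \<omega>) A u = \<sigma>0 u"
        using o'(3) ag[of u] jK unfolding mg_def
        by (cases "u \<in> A"; cases "u = j") (auto simp: restrict_def fun_eq_iff split: if_splits)
    qed
    show ?thesis using mg_sat_K[OF o(2) o'(2)] m1 r1 r0 pe
      unfolding swp_def S1_def S0_def ext_def sat_assignments_def by (simp add: Let_def)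
  qed
  have bij: "bij_betw (swp C j) ?P ?P"
  proof (rule bij_betw_byWitness[where f'="swp C j"])
    show "\<forall>a\<in>?P. swp C j (swp C j a) = a" by (simp add: swp_swp)
    show "\<forall>a\<in>?P. swp C j (swp C j a) = a" by (simp add: swp_swp)
    show "swp C j ` ?P \<subseteq> ?P" using into by blast
    show "swp C j ` ?P \<subseteq> ?P" using into by blast
  qed
  define g where "g pr = (of_bool (fst pr v) - of_bool (snd pr v) :: real)" for pr
  define g0 where "g0 pr = (if v \<in> Kset C j (fst pr) (snd pr) then 0 else g pr)" for pr
  have g0swp: "g0 (swp C j pr) = - g0 pr" for pr
  proof -
    obtain \<omega> \<omega>' where pe: "pr = (\<omega>, \<omega>')" by (cases pr)
    let ?K = "Kset C j \<omega> \<omega>'"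
    have s1: "swp C j pr = (mg ?K \<omega> \<omega>', mg ?K \<omega>' \<omega>)" unfolding swp_def pe Let_def by simp
    have kk: "Kset C j (mg ?K \<omega> \<omega>') (mg ?K \<omega>' \<omega>) = ?K" by (rule Kset_mg)
    show ?thesis unfolding s1 unfolding g0_def g_def fst_conv snd_conv kk pe by (simp add: mg_def)
  qed
  have "sum g0 ?P = sum (g0 \<circ> swp C j) ?P"
    using sum.reindex_bij_betw[OF bij, of g0] by simp
  also have "\<dots> = - sum g0 ?P" by (simp add: g0swp sum_negf o_def)
  finally have z: "sum g0 ?P = 0" by simp
  have "sum g ?P = sum g0 ?P + (\<Sum>pr\<in>?P. if v \<in> Kset C j (fst pr) (snd pr) then g pr else 0)"
    unfolding g0_def by (simp add: sum.distrib[symmetric]) (rule sum.cong, auto)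
  hence eq: "sum g ?P = (\<Sum>pr\<in>?P. if v \<in> Kset C j (fst pr) (snd pr) then g pr else 0)" using z by simp
  have "\<bar>sum g ?P\<bar> \<le> (\<Sum>pr\<in>?P. \<bar>if v \<in> Kset C j (fst pr) (snd pr) then g pr else 0\<bar>)"
    unfolding eq by (rule sum_abs)
  also have "\<dots> \<le> (\<Sum>pr\<in>?P. if v \<in> Kset C j (fst pr) (snd pr) then 1 else 0)"
    by (rule sum_mono) (auto simp: g_def)
  also have "\<dots> = card {pr \<in> ?P. v \<in> Kset C j (fst pr) (snd pr)}"
    using finP by (simp add: sum.If_cases Int_def conj_commute)
  finally have b: "\<bar>sum g ?P\<bar> \<le> card {pr \<in> ?P. v \<in> Kset C j (fst pr) (snd pr)}" .
  have "sum g ?P = (\<Sum>\<omega>\<in>S1. \<Sum>\<omega>'\<in>S0. of_bool (\<omega> v) - of_bool (\<omega>' v))"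
    unfolding g_def sum.cartesian_product by (rule sum.cong) auto
  also have "\<dots> = (\<Sum>\<omega>\<in>S1. real (card S0) * of_bool (\<omega> v)) - (\<Sum>\<omega>\<in>S1. \<Sum>\<omega>'\<in>S0. (of_bool (\<omega>' v) :: real))"
    by (simp add: sum_subtractf)
  also have "\<dots> = real (card S0 * card {\<omega>\<in>S1. \<omega> v}) - real (card S1 * card {\<omega>\<in>S0. \<omega> v})"
    using finS by (simp add: sum_distrib_left[symmetric] sum.If_cases of_bool_def Int_def)
  finally show ?thesis using b by simp
qed


definition chain :: "'v clause set \<Rightarrow> 'v clause list \<Rightarrow> bool" where
  "chain C cs \<longleftrightarrow> cs \<noteq> [] \<and> set cs \<subseteq> C \<and>
     (\<forall>i. Suc i < length cs \<longrightarrow> clause_vars (cs ! i) \<inter> clause_vars (cs ! Suc i) \<noteq> {})"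

definition induced :: "'v clause list \<Rightarrow> bool" where
  "induced cs \<longleftrightarrow> (\<forall>i i'. i + 2 \<le> i' \<and> i' < length cs \<longrightarrow> clause_vars (cs ! i) \<inter> clause_vars (cs ! i') = {})"

lemma chain_snoc:
  assumes "chain C cs" "c \<in> C" "clause_vars (last cs) \<inter> clause_vars c \<noteq> {}"
  shows "chain C (cs @ [c])"
  unfolding chain_def
proof (intro conjI allI impI)
  show "cs @ [c] \<noteq> []" by simp
  show "set (cs @ [c]) \<subseteq> C" using assms unfolding chain_def by auto
  fix i assume i: "Suc i < length (cs @ [c])"
  show "clause_vars ((cs @ [c]) ! i) \<inter> clause_vars ((cs @ [c]) ! Suc i) \<noteq> {}"
  proof (cases "Suc i < length cs")
    case True thus ?thesis using assms(1) unfolding chain_def by (simp add: nth_append)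
  next
    case False
    hence "Suc i = length cs" using i by simp
    moreover have "cs \<noteq> []" using assms(1) unfolding chain_def by simp
    ultimately have "cs ! i = last cs"
      by (metis diff_Suc_1 last_conv_nth)
    thus ?thesis using assms(3) \<open>Suc i = length cs\<close> by (simp add: nth_append)
  qed
qed

lemma chain_butlast:
  assumes "chain C (cs @ [c])" "cs \<noteq> []"
  shows "chain C cs \<and> c \<in> C \<and> clause_vars (last cs) \<inter> clause_vars c \<noteq> {}"
proof (intro conjI)
  show "chain C cs" unfolding chain_def
  proof (intro conjI allI impI)
    show "cs \<noteq> []" by fact
    show "set cs \<subseteq> C" using assms(1) unfolding chain_def by auto
    fix i assume "Suc i < length cs"
    thus "clause_vars (cs ! i) \<inter> clause_vars (cs ! Suc i) \<noteq> {}"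
      using assms(1) unfolding chain_def by (auto simp: nth_append dest!: spec[of _ i])
  qed
  show "c \<in> C" using assms(1) unfolding chain_def by auto
  have "Suc (length cs - 1) < length (cs @ [c])" using assms(2) by simp
  hence "clause_vars ((cs @ [c]) ! (length cs - 1)) \<inter> clause_vars ((cs @ [c]) ! Suc (length cs - 1)) \<noteq> {}"
    using assms(1) unfolding chain_def by blast
  moreover have "(cs @ [c]) ! (length cs - 1) = last cs" using assms(2)
    by (simp add: nth_append last_conv_nth)
  moreover have "(cs @ [c]) ! Suc (length cs - 1) = c" using assms(2)
    by (simp add: nth_append)
  ultimately show "clause_vars (last cs) \<inter> clause_vars c \<noteq> {}" by simp
qed

lemma reach_chain:
  assumes "(j, w) \<in> (link C \<omega> \<omega>')\<^sup>*" "w \<noteq> j"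
  shows "\<exists>cs. chain C cs \<and> j \<in> clause_vars (hd cs) \<and> w \<in> clause_vars (last cs) \<and> (\<forall>c\<in>set cs. unsafe c \<omega> \<omega>')"
  using assms
proof (induction rule: rtrancl_induct)
  case base thus ?case by simp
next
  case (step y z)
  from step.hyps(2) obtain c where c: "c \<in> C" "unsafe c \<omega> \<omega>'" "y \<in> clause_vars c" "z \<in> clause_vars c"
    unfolding link_def by blast
  show ?case
  proof (cases "y = j")
    case True
    show ?thesis
      by (rule exI[of _ "[c]"]) (use c True in \<open>auto simp: chain_def\<close>)
  next
    case False
    then obtain cs where cs: "chain C cs" "j \<in> clause_vars (hd cs)" "y \<in> clause_vars (last cs)"
      "\<forall>c\<in>set cs. unsafe c \<omega> \<omega>'" using step.IH by blast
    have ne: "cs \<noteq> []" using cs(1) unfolding chain_def by simp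
    have "chain C (cs @ [c])" by (rule chain_snoc) (use cs c in auto)
    thus ?thesis using cs c ne by (intro exI[of _ "cs @ [c]"]) auto
  qed
qed

lemma shortcut:
  assumes ch: "chain C cs" and ii: "i + 2 \<le> i'" "i' < length cs"
    and sh: "clause_vars (cs ! i) \<inter> clause_vars (cs ! i') \<noteq> {}"
  defines "cs' \<equiv> take (Suc i) cs @ drop i' cs"
  shows "chain C cs' \<and> hd cs' = hd cs \<and> last cs' = last cs \<and> set cs' \<subseteq> set cs \<and> length cs' < length cs"
proof -
  have lt: "length (take (Suc i) cs) = Suc i" using ii by simp
  have len: "length cs' = Suc i + (length cs - i')" unfolding cs'_def using ii by simp
  have nth1: "cs' ! t = cs ! t" if "t < Suc i" for t
    unfolding cs'_def using that lt ii by (simp add: nth_append)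
  have nth2: "cs' ! t = cs ! (i' + (t - Suc i))" if "Suc i \<le> t" "t < length cs'" for t
    unfolding cs'_def using that lt ii len by (simp add: nth_append)
  have ch': "chain C cs'" unfolding chain_def
  proof (intro conjI allI impI)
    show "cs' \<noteq> []" unfolding cs'_def using ii by simp
    have "set cs' \<subseteq> set cs" unfolding cs'_def
      using set_drop_subset set_take_subset by (metis Un_least set_append)
    thus "set cs' \<subseteq> C" using ch unfolding chain_def by blast
    fix t assume t: "Suc t < length cs'"
    show "clause_vars (cs' ! t) \<inter> clause_vars (cs' ! Suc t) \<noteq> {}"
    proof (cases "Suc t < Suc i")
      case True
      thus ?thesis using nth1[of t] nth1[of "Suc t"] ch ii unfolding chain_def by auto
    next
      case False
      show ?thesis
      proof (cases "t = i")
        case True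
        thus ?thesis using nth1[of i] nth2[of "Suc i"] t sh by simp
      next
        case False
        hence ti: "Suc i \<le> t" using \<open>\<not> Suc t < Suc i\<close> by simp
        have e1: "cs' ! t = cs ! (i' + (t - Suc i))" using nth2[OF ti] t by simp
        have e2: "cs' ! Suc t = cs ! Suc (i' + (t - Suc i))"
        proof -
          have "cs' ! Suc t = cs ! (i' + (Suc t - Suc i))" using nth2[of "Suc t"] ti t by simp
          moreover have "i' + (Suc t - Suc i) = Suc (i' + (t - Suc i))" using ti by simp
          ultimately show ?thesis by (simp only:)
        qed
        have "Suc (i' + (t - Suc i)) < length cs" using t len ti by simp
        thus ?thesis using e1 e2 ch unfolding chain_def by simp
      qed
    qed
  qed
  have "take (Suc i) cs \<noteq> []" using ii by (cases cs) auto
  hence "hd cs' = hd cs" unfolding cs'_def by (simp add: hd_append)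
  moreover have "last cs' = last cs" unfolding cs'_def using ii by (simp add: last_append)
  moreover have "set cs' \<subseteq> set cs" unfolding cs'_def
    using set_drop_subset set_take_subset by (metis Un_least set_append)
  moreover have "length cs' < length cs" using len ii by simp
  ultimately show ?thesis using ch' by blast
qed

lemma exists_induced:
  assumes "(j, w) \<in> (link C \<omega> \<omega>')\<^sup>*" "w \<noteq> j"
  shows "\<exists>cs. chain C cs \<and> induced cs \<and> j \<in> clause_vars (hd cs) \<and> w \<in> clause_vars (last cs) \<and> (\<forall>c\<in>set cs. unsafe c \<omega> \<omega>')"
proof -
  define G where "G cs \<longleftrightarrow> chain C cs \<and> j \<in> clause_vars (hd cs) \<and> w \<in> clause_vars (last cs) \<and> (\<forall>c\<in>set cs. unsafe c \<omega> \<omega>')" for cs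
  obtain cs0 where "G cs0" using reach_chain[OF assms] unfolding G_def by blast
  then obtain cs where G: "G cs" and min: "\<And>cs'. G cs' \<Longrightarrow> length cs \<le> length cs'"
    using ex_has_least_nat[of G cs0 length] by blast
  have "induced cs" unfolding induced_def
  proof (intro allI impI, rule ccontr)
    fix i i' assume ii: "i + 2 \<le> i' \<and> i' < length cs" and sh: "clause_vars (cs ! i) \<inter> clause_vars (cs ! i') \<noteq> {}"
    define cs' where "cs' = take (Suc i) cs @ drop i' cs"
    have "chain C cs' \<and> hd cs' = hd cs \<and> last cs' = last cs \<and> set cs' \<subseteq> set cs \<and> length cs' < length cs"
      unfolding cs'_def by (rule shortcut) (use G ii sh in \<open>auto simp: G_def\<close>)
    hence "G cs'" "length cs' < length cs" using G unfolding G_def by auto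
    thus False using min by fastforce
  qed
  thus ?thesis using G unfolding G_def by blast
qed


lemma card_pat:
  fixes Q :: "'v set" and s :: "'v \<Rightarrow> bool"
  assumes finQ: "finite Q"
  shows "card {pr \<in> (Q \<rightarrow>\<^sub>E (UNIV::bool set)) \<times> (Q \<rightarrow>\<^sub>E (UNIV::bool set)). \<forall>u\<in>Q. \<not> (fst pr u = s u \<and> snd pr u = s u)} \<le> 3 ^ card Q"
proof -
  let ?Pat = "{pr \<in> (Q \<rightarrow>\<^sub>E (UNIV::bool set)) \<times> (Q \<rightarrow>\<^sub>E (UNIV::bool set)). \<forall>u\<in>Q. \<not> (fst pr u = s u \<and> snd pr u = s u)}"
  let ?T = "\<lambda>u. {xy :: bool \<times> bool. \<not> (fst xy = s u \<and> snd xy = s u)}"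
  let ?f = "\<lambda>pr. (\<lambda>u\<in>Q. (fst pr u, snd pr u))"
  have inj: "inj_on ?f ?Pat"
  proof (rule inj_onI)
    fix x y assume x: "x \<in> ?Pat" and y: "y \<in> ?Pat" and e: "?f x = ?f y"
    have "fst x u = fst y u \<and> snd x u = snd y u" for u
    proof (cases "u \<in> Q")
      case True thus ?thesis using fun_cong[OF e, of u] by simp
    next
      case False thus ?thesis using x y by (auto simp: PiE_def extensional_def)
    qed
    thus "x = y" by (simp add: fun_eq_iff prod_eq_iff)
  qed
  have img: "?f ` ?Pat \<subseteq> Pi\<^sub>E Q ?T" by auto
  have fin: "finite (Pi\<^sub>E Q ?T)" using finQ by (simp add: finite_PiE)
  have "card ?Pat \<le> card (Pi\<^sub>E Q ?T)" by (rule card_inj_on_le[OF inj img fin])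
  also have "\<dots> = (\<Prod>u\<in>Q. card (?T u))" using finQ by (rule card_PiE)
  also have "\<dots> = (\<Prod>u\<in>Q. 3)"
  proof (rule prod.cong)
    fix u assume "u \<in> Q"
    have "?T u = {(\<not> s u, \<not> s u), (\<not> s u, s u), (s u, \<not> s u)}" by auto
    thus "card (?T u) = 3" by (cases "s u") auto
  qed simp
  finally show ?thesis by simp
qed

context formula
begin

definition th :: real where "th = (1/2) / (1 - 2 * p) ^ d"
definition rho :: real where "rho = 3 * th ^ 2"
definition bb :: real where "bb = rho ^ k\<beta>"

lemma q_pos: "0 < 1 - 2 * p" using p4 by simp

lemma th_pos: "0 < th" unfolding th_def using q_pos by simp

lemma fix_bound:
  assumes AM: "A \<subseteq> M" and \<sigma>: "\<sigma> \<in> A \<rightarrow>\<^sub>E (UNIV::bool set)" and Q: "Q \<subseteq> V - M"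
    and a: "a \<in> Q \<rightarrow>\<^sub>E (UNIV::bool set)"
  shows "real (card {\<omega> \<in> ext V C A \<sigma>. restrict \<omega> Q = a}) \<le> th ^ card Q * card (ext V C A \<sigma>)"
proof -
  have h: "real (card {\<omega> \<in> ext V C A \<sigma>. restrict \<omega> Q = a}) * (1 - 2 * p) ^ (d * card Q)
     \<le> (1/2) ^ card Q * card (ext V C A \<sigma>)" by (rule ext_hss[OF AM \<sigma> Q a])
  have e: "(1 - 2 * p) ^ (d * card Q) = ((1 - 2 * p) ^ d) ^ card Q" by (simp add: power_mult)
  have pos: "0 < ((1 - 2 * p) ^ d) ^ card Q" using q_pos by simp
  have "real (card {\<omega> \<in> ext V C A \<sigma>. restrict \<omega> Q = a}) \<le> (1/2) ^ card Q * card (ext V C A \<sigma>) / ((1 - 2 * p) ^ d) ^ card Q"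
    using h unfolding e using pos by (simp add: pos_le_divide_eq)
  also have "\<dots> = th ^ card Q * card (ext V C A \<sigma>)" unfolding th_def by (simp add: power_divide)
  finally show ?thesis .
qed

lemma pair_bound:
  assumes AM: "A \<subseteq> M" and s1: "\<sigma>1 \<in> A \<rightarrow>\<^sub>E (UNIV::bool set)" and s0: "\<sigma>0 \<in> A \<rightarrow>\<^sub>E (UNIV::bool set)"
    and Q: "Q \<subseteq> V - M"
  shows "real (card {pr \<in> ext V C A \<sigma>1 \<times> ext V C A \<sigma>0. \<forall>u\<in>Q. \<not> (fst pr u = s u \<and> snd pr u = s u)})
     \<le> rho ^ card Q * card (ext V C A \<sigma>1) * card (ext V C A \<sigma>0)"
proof -
  let ?E1 = "ext V C A \<sigma>1" and ?E0 = "ext V C A \<sigma>0"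
  let ?Pat = "{pr \<in> (Q \<rightarrow>\<^sub>E (UNIV::bool set)) \<times> (Q \<rightarrow>\<^sub>E (UNIV::bool set)). \<forall>u\<in>Q. \<not> (fst pr u = s u \<and> snd pr u = s u)}"
  let ?F = "\<lambda>ab. {\<omega> \<in> ?E1. restrict \<omega> Q = fst ab} \<times> {\<omega> \<in> ?E0. restrict \<omega> Q = snd ab}"
  have finQ: "finite Q" using Q finV finite_subset by blast
  have finPat: "finite ?Pat"
    by (rule finite_subset[of _ "(Q \<rightarrow>\<^sub>E (UNIV::bool set)) \<times> (Q \<rightarrow>\<^sub>E (UNIV::bool set))"]) (auto simp: finQ finite_PiE)
  have finE: "finite ?E1" "finite ?E0"
    using finite_PiE[OF finV, of "\<lambda>_. UNIV :: bool set"]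
    unfolding ext_def sat_assignments_def by (auto intro: finite_subset)
  have sub: "{pr \<in> ?E1 \<times> ?E0. \<forall>u\<in>Q. \<not> (fst pr u = s u \<and> snd pr u = s u)} \<subseteq> (\<Union>ab\<in>?Pat. ?F ab)"
  proof
    fix pr assume pr: "pr \<in> {pr \<in> ?E1 \<times> ?E0. \<forall>u\<in>Q. \<not> (fst pr u = s u \<and> snd pr u = s u)}"
    let ?ab = "(restrict (fst pr) Q, restrict (snd pr) Q)"
    have "?ab \<in> ?Pat" using pr by auto
    moreover have "pr \<in> ?F ?ab" using pr by auto
    ultimately show "pr \<in> (\<Union>ab\<in>?Pat. ?F ab)" by blast
  qed
  have "card {pr \<in> ?E1 \<times> ?E0. \<forall>u\<in>Q. \<not> (fst pr u = s u \<and> snd pr u = s u)} \<le> card (\<Union>ab\<in>?Pat. ?F ab)"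
    by (rule card_mono[OF _ sub]) (use finPat finE in auto)
  also have "\<dots> \<le> (\<Sum>ab\<in>?Pat. card (?F ab))" by (rule card_UN_le[OF finPat])
  finally have c0: "card {pr \<in> ?E1 \<times> ?E0. \<forall>u\<in>Q. \<not> (fst pr u = s u \<and> snd pr u = s u)} \<le> (\<Sum>ab\<in>?Pat. card (?F ab))" .
  hence "real (card {pr \<in> ?E1 \<times> ?E0. \<forall>u\<in>Q. \<not> (fst pr u = s u \<and> snd pr u = s u)}) \<le> real (\<Sum>ab\<in>?Pat. card (?F ab))"
    by (simp only: of_nat_le_iff)
  also have "\<dots> = (\<Sum>ab\<in>?Pat. real (card (?F ab)))" by simp
  also have "\<dots> \<le> (\<Sum>ab\<in>?Pat. (th ^ card Q * card ?E1) * (th ^ card Q * card ?E0))"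
  proof (rule sum_mono)
    fix ab assume ab: "ab \<in> ?Pat"
    have b1: "real (card {\<omega> \<in> ?E1. restrict \<omega> Q = fst ab}) \<le> th ^ card Q * card ?E1"
      by (rule fix_bound[OF AM s1 Q]) (use ab in auto)
    have b0: "real (card {\<omega> \<in> ?E0. restrict \<omega> Q = snd ab}) \<le> th ^ card Q * card ?E0"
      by (rule fix_bound[OF AM s0 Q]) (use ab in auto)
    have "real (card (?F ab)) = real (card {\<omega> \<in> ?E1. restrict \<omega> Q = fst ab}) * real (card {\<omega> \<in> ?E0. restrict \<omega> Q = snd ab})"
      by (simp add: card_cartesian_product)
    also have "\<dots> \<le> (th ^ card Q * card ?E1) * (th ^ card Q * card ?E0)"
      by (rule mult_mono[OF b1 b0]) (use th_pos in auto)
    finally show "real (card (?F ab)) \<le> (th ^ card Q * card ?E1) * (th ^ card Q * card ?E0)" .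
  qed
  also have "\<dots> = card ?Pat * ((th ^ card Q * card ?E1) * (th ^ card Q * card ?E0))" by simp
  also have "\<dots> \<le> 3 ^ card Q * ((th ^ card Q * card ?E1) * (th ^ card Q * card ?E0))"
  proof (rule mult_right_mono)
    have "card ?Pat \<le> 3 ^ card Q" by (rule card_pat[OF finQ])
    hence "real (card ?Pat) \<le> real (3 ^ card Q)" by (simp only: of_nat_le_iff)
    thus "real (card ?Pat) \<le> 3 ^ card Q" by simp
  qed (use th_pos in auto)
  also have "\<dots> = rho ^ card Q * card ?E1 * card ?E0"
    unfolding rho_def by (simp add: power_mult_distrib power_mult[symmetric] algebra_simps power2_eq_square)
  finally show ?thesis .
qed

end


definition oddI :: "'a list \<Rightarrow> nat set" where "oddI cs = {i. 2 * i < length cs}"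
definition oddC :: "'a list \<Rightarrow> 'a set" where "oddC cs = (\<lambda>i. cs ! (2 * i)) ` oddI cs"

lemma oddI_eq: "oddI cs = {..< (length cs + 1) div 2}" unfolding oddI_def by auto

context formula
begin

lemma vars_ne: "c \<in> C \<Longrightarrow> clause_vars c \<noteq> {}"
  using card_vars k1 by fastforce

lemma odd_sub: "chain C cs \<Longrightarrow> oddC cs \<subseteq> C"
  unfolding oddC_def oddI_def chain_def by auto

lemma odd_disj:
  assumes "induced cs" "c1 \<in> oddC cs" "c2 \<in> oddC cs" "c1 \<noteq> c2"
  shows "clause_vars c1 \<inter> clause_vars c2 = {}"
proof -
  obtain i1 where i1: "2 * i1 < length cs" "c1 = cs ! (2 * i1)" using assms(2) unfolding oddC_def oddI_def by auto
  obtain i2 where i2: "2 * i2 < length cs" "c2 = cs ! (2 * i2)" using assms(3) unfolding oddC_def oddI_def by auto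
  have "i1 \<noteq> i2" using i1 i2 assms(4) by auto
  hence "2 * i1 + 2 \<le> 2 * i2 \<or> 2 * i2 + 2 \<le> 2 * i1" by auto
  thus ?thesis using assms(1) i1 i2 unfolding induced_def by (metis Int_commute)
qed

lemma odd_card:
  assumes "chain C cs" "induced cs"
  shows "card (oddC cs) = (length cs + 1) div 2"
proof -
  have "inj_on (\<lambda>i. cs ! (2 * i)) (oddI cs)"
  proof (rule inj_onI, rule ccontr)
    fix i1 i2 assume i: "i1 \<in> oddI cs" "i2 \<in> oddI cs" "cs ! (2 * i1) = cs ! (2 * i2)" "i1 \<noteq> i2"
    hence "2 * i1 + 2 \<le> 2 * i2 \<or> 2 * i2 + 2 \<le> 2 * i1" by auto
    hence "clause_vars (cs ! (2 * i1)) \<inter> clause_vars (cs ! (2 * i2)) = {}"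
      using assms(2) i unfolding induced_def oddI_def by (metis Int_commute mem_Collect_eq)
    moreover have "cs ! (2 * i1) \<in> C" using assms(1) i(1) unfolding chain_def oddI_def by auto
    ultimately show False using vars_ne i(3) by auto
  qed
  hence "card (oddC cs) = card (oddI cs)" unfolding oddC_def by (rule card_image)
  thus ?thesis unfolding oddI_eq by simp
qed

lemma pd_small: "p * real d \<le> 1 / 2 ^ 16"
proof -
  have "d * k \<le> d ^ 9 * k ^ 9"
    using d1 k1 by (intro mult_mono) (auto simp: self_le_power)
  moreover have "d \<le> d * k" using k1 by simp
  ultimately have "d \<le> d ^ 9 * k ^ 9" by linarith
  hence "2 ^ 16 * d \<le> 2 ^ 16 * (d ^ 9 * k ^ 9)" by simp
  hence "2 ^ 16 * d \<le> (2::nat) ^ k\<beta>" using num by (simp add: mult.assoc)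
  hence "real (2 ^ 16 * d) \<le> real (2 ^ k\<beta>)" by (simp only: of_nat_le_iff)
  hence "2 ^ 16 * real d \<le> 2 ^ k\<beta>" by simp
  thus ?thesis unfolding p_def by (simp add: field_simps power_one_over)
qed

lemma qd_lower: "1 - 1 / 2 ^ 15 \<le> (1 - 2 * p) ^ d"
proof -
  have "1 + real d * (- 2 * p) \<le> (1 + (- 2 * p)) ^ d"
    by (rule Bernoulli_inequality) (use p4 in simp)
  moreover have "real d * (2 * p) \<le> 2 / 2 ^ 16" using pd_small by (simp add: algebra_simps)
  ultimately show ?thesis by simp
qed

lemma rho_nonneg: "0 \<le> rho" unfolding rho_def by simp

lemma rho_le: "rho \<le> 751 / 1000"
proof -
  have q: "1 - 1 / 2 ^ 15 \<le> (1 - 2 * p) ^ d" by (rule qd_lower)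
  have q0: "(0::real) < 1 - 1 / 2 ^ 15" by simp
  have "th \<le> (1/2) / (1 - 1 / 2 ^ 15)" unfolding th_def
    by (rule divide_left_mono[OF q]) (use q0 q in auto)
  hence "th ^ 2 \<le> ((1/2) / (1 - 1 / 2 ^ 15)) ^ 2" using th_pos by (intro power_mono) auto
  hence "rho \<le> 3 * ((1/2) / (1 - 1 / 2 ^ 15)) ^ 2" unfolding rho_def by simp
  also have "\<dots> \<le> 751 / 1000" by (simp add: power2_eq_square)
  finally show ?thesis .
qed

lemma rho_le1: "rho \<le> 1" using rho_le by simp

lemma bb_nonneg: "0 \<le> bb" unfolding bb_def using rho_nonneg by simp

lemma bb5: "bb ^ 5 \<le> (1/4) ^ k\<beta>"
proof -
  have "rho ^ 5 \<le> (751 / 1000) ^ 5" using rho_le rho_nonneg by (intro power_mono) auto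
  also have "\<dots> \<le> 1/4" by (simp add: power_divide)
  finally have r5: "rho ^ 5 \<le> 1/4" .
  have "bb ^ 5 = (rho ^ 5) ^ k\<beta>" unfolding bb_def by (simp add: power_mult[symmetric] mult.commute)
  also have "\<dots> \<le> (1/4) ^ k\<beta>" using r5 rho_nonneg by (intro power_mono) auto
  finally show ?thesis .
qed

lemma x2bb: "real (k * d) ^ 2 * bb \<le> 1/16"
proof -
  define x where "x = real (k * d)"
  have x1: "1 \<le> x" unfolding x_def using d1 k1
    by (metis One_nat_def Suc_le_eq mult_pos_pos of_nat_1 of_nat_le_iff)
  have n: "2 ^ 16 * x ^ 9 \<le> 2 ^ k\<beta>"
  proof -
    have "real (2 ^ 16 * d ^ 9 * k ^ 9) \<le> real ((2::nat) ^ k\<beta>)" using num by (simp only: of_nat_le_iff)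
    thus ?thesis unfolding x_def by (simp add: power_mult_distrib mult.commute mult.left_commute)
  qed
  have "(x ^ 2 * bb) ^ 5 = x ^ 10 * bb ^ 5" by (simp add: power_mult_distrib power_mult[symmetric])
  also have "\<dots> \<le> x ^ 10 * (1/4) ^ k\<beta>" using bb5 x1 by (intro mult_left_mono) auto
  also have "\<dots> = x ^ 10 / (2 ^ k\<beta>) ^ 2"
  proof -
    have "(4::real) ^ k\<beta> = (2 ^ 2) ^ k\<beta>" by simp
    also have "\<dots> = 2 ^ (2 * k\<beta>)" by (simp only: power_mult)
    also have "\<dots> = (2 ^ k\<beta>) ^ 2" by (simp only: power_mult mult.commute)
    finally have "(4::real) ^ k\<beta> = (2 ^ k\<beta>) ^ 2" .
    thus ?thesis by (simp add: power_one_over)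
  qed
  also have "\<dots> \<le> x ^ 10 / (2 ^ 16 * x ^ 9) ^ 2"
  proof (rule divide_left_mono)
    show "(2 ^ 16 * x ^ 9) ^ 2 \<le> (2 ^ k\<beta>) ^ 2" using n x1 by (intro power_mono) auto
    show "0 \<le> x ^ 10" using x1 by simp
    show "0 < (2 ^ k\<beta>) ^ 2 * (2 ^ 16 * x ^ 9) ^ 2" using x1 by simp
  qed
  also have "\<dots> = 1 / (2 ^ 32 * x ^ 8)" using x1 by (simp add: power_mult_distrib field_simps)
  also have "\<dots> \<le> 1 / 2 ^ 32"
  proof -
    have "1 \<le> x ^ 8" using x1 by (simp add: one_le_power)
    hence "(2::real) ^ 32 \<le> 2 ^ 32 * x ^ 8" by simp
    thus ?thesis using x1 by (intro divide_left_mono) auto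
  qed
  also have "\<dots> \<le> (1/16) ^ 5" by (simp add: power_divide)
  finally have f5: "(x ^ 2 * bb) ^ 5 \<le> (1/16) ^ 5" .
  have five: "Suc 4 = (5::nat)" by simp
  have "(x ^ 2 * bb) ^ Suc 4 \<le> (1/16) ^ Suc 4" unfolding five by (rule f5)
  hence "x ^ 2 * bb \<le> 1/16"
    by (rule power_le_imp_le_base) simp
  thus ?thesis unfolding x_def .
qed

lemma term_bound:
  assumes "1 \<le> l"
  shows "real (k * d) ^ l * bb ^ ((l + 1) div 2) \<le> (1/4) ^ l"
proof -
  define x where "x = real (k * d)"
  define h where "h = (l + 1) div 2"
  have x1: "1 \<le> x" unfolding x_def using d1 k1
    by (metis One_nat_def Suc_le_eq mult_pos_pos of_nat_1 of_nat_le_iff)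
  have lh: "l \<le> 2 * h" unfolding h_def by simp
  have "x ^ l * bb ^ h \<le> x ^ (2 * h) * bb ^ h"
    using x1 lh bb_nonneg by (intro mult_right_mono power_increasing) auto
  also have "\<dots> = (x ^ 2 * bb) ^ h" by (simp add: power_mult power_mult_distrib)
  also have "\<dots> \<le> (1/16) ^ h" using x2bb bb_nonneg unfolding x_def[symmetric]
    by (intro power_mono) auto
  also have "\<dots> = (1/4) ^ (2 * h)"
  proof -
    have "(1/4::real) ^ (2 * h) = ((1/4) ^ 2) ^ h" by (simp only: power_mult)
    moreover have "((1/4::real) ^ 2) = 1/16" by (simp add: power2_eq_square)
    ultimately show ?thesis by simp
  qed
  also have "\<dots> \<le> (1/4) ^ l" using lh by (intro power_decreasing) auto
  finally show ?thesis unfolding x_def h_def .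
qed

end

lemma geom4: "(\<Sum>l\<in>{1..L}. (1/4::real) ^ l) = (1 - (1/4) ^ L) / 3"
proof (induction L)
  case 0 thus ?case by simp
next
  case (Suc L)
  have "(\<Sum>l\<in>{1..Suc L}. (1/4::real) ^ l) = (\<Sum>l\<in>{1..L}. (1/4::real) ^ l) + (1/4) ^ Suc L"
    by (simp add: sum.cl_ivl_Suc)
  also have "\<dots> = (1 - (1/4) ^ L) / 3 + (1/4) * (1/4) ^ L" using Suc by simp
  also have "\<dots> = (1 - (1/4) ^ Suc L) / 3" by (simp add: field_simps)
  finally show ?case .
qed


context formula
begin

definition ICH :: "'v \<Rightarrow> 'v \<Rightarrow> 'v clause list set" where
  "ICH j w = {cs. chain C cs \<and> induced cs \<and> j \<in> clause_vars (hd cs) \<and> w \<in> clause_vars (last cs)}"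
definition ICHa :: "'v \<Rightarrow> 'v clause list set" where
  "ICHa j = {cs. chain C cs \<and> induced cs \<and> j \<in> clause_vars (hd cs)}"
definition CH :: "'v \<Rightarrow> nat \<Rightarrow> 'v clause list set" where
  "CH j l = {cs. chain C cs \<and> length cs = l \<and> j \<in> clause_vars (hd cs)}"

lemma ich_len: "chain C cs \<Longrightarrow> induced cs \<Longrightarrow> length cs \<le> 2 * card C"
proof -
  assume a: "chain C cs" "induced cs"
  have "card (oddC cs) \<le> card C" using odd_sub[OF a(1)] finC by (simp add: card_mono)
  hence "(length cs + 1) div 2 \<le> card C" using odd_card[OF a] by simp
  thus ?thesis by linarith
qed

lemma finite_ICHa: "finite (ICHa j)"
proof (rule finite_subset)
  show "ICHa j \<subseteq> {xs. set xs \<subseteq> C \<and> length xs \<le> 2 * card C}"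
  proof
    fix cs assume "cs \<in> ICHa j"
    hence c: "chain C cs" "induced cs" unfolding ICHa_def by auto
    have "set cs \<subseteq> C" using c(1) unfolding chain_def by blast
    thus "cs \<in> {xs. set xs \<subseteq> C \<and> length xs \<le> 2 * card C}" using ich_len[OF c] by blast
  qed
  show "finite {xs. set xs \<subseteq> C \<and> length xs \<le> 2 * card C}" by (rule finite_lists_length_le[OF finC])
qed

lemma ICH_sub: "ICH j w \<subseteq> ICHa j" unfolding ICH_def ICHa_def by blast

lemma finite_ICH: "finite (ICH j w)" by (rule finite_subset[OF ICH_sub finite_ICHa])

lemma unsafe_odd_bound:
  assumes AM: "A \<subseteq> M" and s1: "\<sigma>1 \<in> A \<rightarrow>\<^sub>E (UNIV::bool set)" and s0: "\<sigma>0 \<in> A \<rightarrow>\<^sub>E (UNIV::bool set)"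
    and ch: "chain C cs" and ind: "induced cs"
  shows "real (card {pr \<in> ext V C A \<sigma>1 \<times> ext V C A \<sigma>0. \<forall>c\<in>oddC cs. unsafe c (fst pr) (snd pr)})
     \<le> bb ^ ((length cs + 1) div 2) * card (ext V C A \<sigma>1) * card (ext V C A \<sigma>0)"
proof -
  let ?E1 = "ext V C A \<sigma>1" and ?E0 = "ext V C A \<sigma>0"
  define Q where "Q = (\<Union>c\<in>oddC cs. clause_vars c - M)"
  define s where "s u = (SOME b. \<exists>c\<in>oddC cs. (u, b) \<in> c)" for u
  have OC: "oddC cs \<subseteq> C" by (rule odd_sub[OF ch])
  have finO: "finite (oddC cs)" using OC finC finite_subset by blast
  have QV: "Q \<subseteq> V - M" unfolding Q_def using OC varsV by blast
  have sub: "{pr \<in> ?E1 \<times> ?E0. \<forall>c\<in>oddC cs. unsafe c (fst pr) (snd pr)}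
      \<subseteq> {pr \<in> ?E1 \<times> ?E0. \<forall>u\<in>Q. \<not> (fst pr u = s u \<and> snd pr u = s u)}"
  proof
    fix pr assume pr: "pr \<in> {pr \<in> ?E1 \<times> ?E0. \<forall>c\<in>oddC cs. unsafe c (fst pr) (snd pr)}"
    have "\<not> (fst pr u = s u \<and> snd pr u = s u)" if u: "u \<in> Q" for u
    proof
      assume e: "fst pr u = s u \<and> snd pr u = s u"
      obtain c where c: "c \<in> oddC cs" "u \<in> clause_vars c" using u unfolding Q_def by blast
      then obtain b0 where "(u, b0) \<in> c" unfolding clause_vars_def by auto
      hence "\<exists>c\<in>oddC cs. (u, b0) \<in> c" using c(1) by blast
      hence "\<exists>c\<in>oddC cs. (u, s u) \<in> c" unfolding s_def by (rule someI)
      then obtain c' where c': "c' \<in> oddC cs" "(u, s u) \<in> c'" by blast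
      have "unsafe c' (fst pr) (snd pr)" using pr c'(1) by simp
      thus False using c'(2) e unfolding unsafe_def by auto
    qed
    thus "pr \<in> {pr \<in> ?E1 \<times> ?E0. \<forall>u\<in>Q. \<not> (fst pr u = s u \<and> snd pr u = s u)}" using pr by blast
  qed
  have fin: "finite (?E1 \<times> ?E0)"
    using finite_PiE[OF finV, of "\<lambda>_. UNIV :: bool set"]
    unfolding ext_def sat_assignments_def by (auto intro: finite_subset)
  have "card {pr \<in> ?E1 \<times> ?E0. \<forall>c\<in>oddC cs. unsafe c (fst pr) (snd pr)}
      \<le> card {pr \<in> ?E1 \<times> ?E0. \<forall>u\<in>Q. \<not> (fst pr u = s u \<and> snd pr u = s u)}"
    by (rule card_mono[OF _ sub]) (use fin in auto)
  hence "real (card {pr \<in> ?E1 \<times> ?E0. \<forall>c\<in>oddC cs. unsafe c (fst pr) (snd pr)})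
      \<le> real (card {pr \<in> ?E1 \<times> ?E0. \<forall>u\<in>Q. \<not> (fst pr u = s u \<and> snd pr u = s u)})"
    by (simp only: of_nat_le_iff)
  also have "\<dots> \<le> rho ^ card Q * card ?E1 * card ?E0" by (rule pair_bound[OF AM s1 s0 QV])
  also have "\<dots> \<le> bb ^ ((length cs + 1) div 2) * card ?E1 * card ?E0"
  proof -
    have "card Q = (\<Sum>c\<in>oddC cs. card (clause_vars c - M))" unfolding Q_def
    proof (rule card_UN_disjoint[OF finO])
      show "\<forall>c\<in>oddC cs. finite (clause_vars c - M)"
      proof
        fix c assume "c \<in> oddC cs"
        hence "clause_vars c \<subseteq> V" using OC varsV by blast
        thus "finite (clause_vars c - M)" using finV by (simp add: finite_subset)
      qed
      show "\<forall>c1\<in>oddC cs. \<forall>c2\<in>oddC cs. c1 \<noteq> c2 \<longrightarrow> (clause_vars c1 - M) \<inter> (clause_vars c2 - M) = {}"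
      proof (intro ballI impI)
        fix c1 c2 assume "c1 \<in> oddC cs" "c2 \<in> oddC cs" "c1 \<noteq> c2"
        from odd_disj[OF ind this] show "(clause_vars c1 - M) \<inter> (clause_vars c2 - M) = {}" by blast
      qed
    qed
    also have "\<dots> \<ge> (\<Sum>c\<in>oddC cs. k\<beta>)" using OC kb by (intro sum_mono) auto
    finally have "k\<beta> * ((length cs + 1) div 2) \<le> card Q" using odd_card[OF ch ind] by (simp add: mult.commute)
    hence "rho ^ card Q \<le> rho ^ (k\<beta> * ((length cs + 1) div 2))"
      using rho_nonneg rho_le1 by (intro power_decreasing) auto
    also have "\<dots> = bb ^ ((length cs + 1) div 2)" unfolding bb_def by (simp add: power_mult)
    finally show ?thesis by (intro mult_right_mono) auto
  qed
  finally show ?thesis .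
qed

lemma per_v:
  assumes wj: "w \<noteq> j" and AM: "A \<subseteq> M" and s1: "\<sigma>1 \<in> A \<rightarrow>\<^sub>E (UNIV::bool set)" and s0: "\<sigma>0 \<in> A \<rightarrow>\<^sub>E (UNIV::bool set)"
  shows "real (card {pr \<in> ext V C A \<sigma>1 \<times> ext V C A \<sigma>0. w \<in> Kset C j (fst pr) (snd pr)})
     \<le> (\<Sum>cs\<in>ICH j w. bb ^ ((length cs + 1) div 2)) * card (ext V C A \<sigma>1) * card (ext V C A \<sigma>0)"
proof -
  let ?E1 = "ext V C A \<sigma>1" and ?E0 = "ext V C A \<sigma>0"
  let ?F = "\<lambda>cs. {pr \<in> ?E1 \<times> ?E0. \<forall>c\<in>oddC cs. unsafe c (fst pr) (snd pr)}"
  have sub: "{pr \<in> ?E1 \<times> ?E0. w \<in> Kset C j (fst pr) (snd pr)} \<subseteq> (\<Union>cs\<in>ICH j w. ?F cs)"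
  proof
    fix pr assume pr: "pr \<in> {pr \<in> ?E1 \<times> ?E0. w \<in> Kset C j (fst pr) (snd pr)}"
    hence "(j, w) \<in> (link C (fst pr) (snd pr))\<^sup>*" unfolding Kset_def by simp
    from exists_induced[OF this wj] obtain cs where cs: "chain C cs" "induced cs" "j \<in> clause_vars (hd cs)"
      "w \<in> clause_vars (last cs)" "\<forall>c\<in>set cs. unsafe c (fst pr) (snd pr)" by blast
    have "oddC cs \<subseteq> set cs" unfolding oddC_def oddI_def by auto
    hence "pr \<in> ?F cs" using pr cs(5) by blast
    moreover have "cs \<in> ICH j w" unfolding ICH_def using cs by blast
    ultimately show "pr \<in> (\<Union>cs\<in>ICH j w. ?F cs)" by blast
  qed
  have fin: "finite (?E1 \<times> ?E0)"
    using finite_PiE[OF finV, of "\<lambda>_. UNIV :: bool set"]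
    unfolding ext_def sat_assignments_def by (auto intro: finite_subset)
  have "card {pr \<in> ?E1 \<times> ?E0. w \<in> Kset C j (fst pr) (snd pr)} \<le> card (\<Union>cs\<in>ICH j w. ?F cs)"
    by (rule card_mono[OF _ sub]) (intro finite_UN_I finite_ICH, auto intro: finite_subset[OF _ fin])
  also have "\<dots> \<le> (\<Sum>cs\<in>ICH j w. card (?F cs))" by (rule card_UN_le[OF finite_ICH])
  finally have "real (card {pr \<in> ?E1 \<times> ?E0. w \<in> Kset C j (fst pr) (snd pr)}) \<le> real (\<Sum>cs\<in>ICH j w. card (?F cs))"
    by (simp only: of_nat_le_iff)
  also have "\<dots> = (\<Sum>cs\<in>ICH j w. real (card (?F cs)))" by simp
  also have "\<dots> \<le> (\<Sum>cs\<in>ICH j w. bb ^ ((length cs + 1) div 2) * card ?E1 * card ?E0)"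
    by (rule sum_mono, rule unsafe_odd_bound[OF AM s1 s0]) (auto simp: ICH_def)
  also have "\<dots> = (\<Sum>cs\<in>ICH j w. bb ^ ((length cs + 1) div 2)) * card ?E1 * card ?E0"
    by (simp add: sum_distrib_right)
  finally show ?thesis .
qed

end


context formula
begin

lemma CH_fin: "finite (CH j l)"
proof (rule finite_subset)
  show "CH j l \<subseteq> {xs. set xs \<subseteq> C \<and> length xs = l}" unfolding CH_def chain_def by auto
  show "finite {xs. set xs \<subseteq> C \<and> length xs = l}" by (rule finite_lists_length_eq[OF finC])
qed

lemma nbr_card: "c \<in> C \<Longrightarrow> card {c'\<in>C. clause_vars c' \<inter> clause_vars c \<noteq> {}} \<le> d * k"
  using touch_card[OF varsV, of c clause_vars] card_vars[of c] by simp

lemma CH_card: "j \<in> V \<Longrightarrow> card (CH j (Suc l)) \<le> d * (k * d) ^ l"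
proof (induction l)
  case 0
  have "CH j (Suc 0) \<subseteq> (\<lambda>c. [c]) ` {c\<in>C. j \<in> clause_vars c}"
  proof
    fix cs assume "cs \<in> CH j (Suc 0)"
    hence cs: "chain C cs" "length cs = 1" "j \<in> clause_vars (hd cs)" unfolding CH_def by auto
    then obtain c where "cs = [c]" by (metis length_0_conv length_Suc_conv One_nat_def)
    thus "cs \<in> (\<lambda>c. [c]) ` {c\<in>C. j \<in> clause_vars c}" using cs unfolding chain_def by auto
  qed
  hence "card (CH j (Suc 0)) \<le> card ((\<lambda>c. [c]) ` {c\<in>C. j \<in> clause_vars c})"
    using finC by (intro card_mono) auto
  also have "\<dots> \<le> card {c\<in>C. j \<in> clause_vars c}" by (rule card_image_le) (use finC in auto)
  also have "\<dots> \<le> d" by (rule deg_le[OF 0])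
  finally show ?case by simp
next
  case (Suc l)
  let ?N = "\<lambda>cs. {c\<in>C. clause_vars c \<inter> clause_vars (last cs) \<noteq> {}}"
  have "CH j (Suc (Suc l)) \<subseteq> (\<lambda>(cs, c). cs @ [c]) ` (SIGMA cs:CH j (Suc l). ?N cs)"
  proof
    fix cs' assume "cs' \<in> CH j (Suc (Suc l))"
    hence cs': "chain C cs'" "length cs' = Suc (Suc l)" "j \<in> clause_vars (hd cs')" unfolding CH_def by auto
    define cs where "cs = butlast cs'"
    define c where "c = last cs'"
    have ne: "cs' \<noteq> []" using cs'(2) by auto
    have eq: "cs' = cs @ [c]" unfolding cs_def c_def using ne by simp
    have ne2: "cs \<noteq> []" unfolding cs_def using cs'(2) by (cases cs' rule: rev_cases) auto
    have cb: "chain C cs \<and> c \<in> C \<and> clause_vars (last cs) \<inter> clause_vars c \<noteq> {}"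
      by (rule chain_butlast) (use cs'(1) eq ne2 in auto)
    have "hd cs = hd cs'" unfolding eq using ne2 by simp
    moreover have "length cs = Suc l" unfolding cs_def using cs'(2) by simp
    ultimately have "cs \<in> CH j (Suc l)" using cb cs'(3) unfolding CH_def by auto
    moreover have "c \<in> ?N cs" using cb by blast
    ultimately show "cs' \<in> (\<lambda>(cs, c). cs @ [c]) ` (SIGMA cs:CH j (Suc l). ?N cs)"
      unfolding eq by force
  qed
  hence "card (CH j (Suc (Suc l))) \<le> card ((\<lambda>(cs, c). cs @ [c]) ` (SIGMA cs:CH j (Suc l). ?N cs))"
    by (intro card_mono finite_imageI finite_SigmaI CH_fin) (use finC in auto)
  also have "\<dots> \<le> card (SIGMA cs:CH j (Suc l). ?N cs)" by (rule card_image_le) (intro finite_SigmaI CH_fin, use finC in auto)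
  also have "\<dots> = (\<Sum>cs\<in>CH j (Suc l). card (?N cs))" by (rule card_SigmaI) (use CH_fin finC in auto)
  also have "\<dots> \<le> (\<Sum>cs\<in>CH j (Suc l). d * k)"
  proof (rule sum_mono)
    fix cs assume "cs \<in> CH j (Suc l)"
    hence "last cs \<in> C" unfolding CH_def chain_def by auto
    thus "card (?N cs) \<le> d * k" by (rule nbr_card)
  qed
  also have "\<dots> = card (CH j (Suc l)) * (d * k)" by simp
  also have "\<dots> \<le> d * (k * d) ^ l * (d * k)" using Suc by (intro mult_right_mono) auto
  also have "\<dots> = d * (k * d) ^ Suc l" by (simp add: mult.commute mult.left_commute)
  finally show ?case .
qed

lemma total:
  assumes jV: "j \<in> V"
  shows "(\<Sum>v\<in>M - {j}. \<Sum>cs\<in>ICH j v. bb ^ ((length cs + 1) div 2)) \<le> 1/3"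
proof -
  let ?h = "\<lambda>cs. bb ^ ((length cs + 1) div 2)"
  have finM: "finite (M - {j})" using MV finV finite_subset by blast
  have eqI: "ICH j v = {cs \<in> ICHa j. v \<in> clause_vars (last cs)}" for v
    unfolding ICH_def ICHa_def by blast
  have "(\<Sum>v\<in>M - {j}. \<Sum>cs\<in>ICH j v. ?h cs) = (\<Sum>v\<in>M - {j}. \<Sum>cs\<in>{cs \<in> ICHa j. v \<in> clause_vars (last cs)}. ?h cs)"
    unfolding eqI ..
  also have "\<dots> = (\<Sum>cs\<in>ICHa j. \<Sum>v\<in>{v \<in> M - {j}. v \<in> clause_vars (last cs)}. ?h cs)"
    by (rule sum.swap_restrict[OF finM finite_ICHa])
  also have "\<dots> \<le> (\<Sum>cs\<in>ICHa j. k * ?h cs)"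
  proof (rule sum_mono)
    fix cs assume "cs \<in> ICHa j"
    hence lc: "last cs \<in> C" unfolding ICHa_def chain_def by auto
    have "card {v \<in> M - {j}. v \<in> clause_vars (last cs)} \<le> card (clause_vars (last cs))"
      using varsV[OF lc] finV by (intro card_mono) (auto intro: finite_subset)
    hence "card {v \<in> M - {j}. v \<in> clause_vars (last cs)} \<le> k" using card_vars[OF lc] by simp
    hence "real (card {v \<in> M - {j}. v \<in> clause_vars (last cs)}) \<le> real k" by (simp only: of_nat_le_iff)
    thus "(\<Sum>v\<in>{v \<in> M - {j}. v \<in> clause_vars (last cs)}. ?h cs) \<le> k * ?h cs"
      using bb_nonneg by (simp add: mult_right_mono)
  qed
  also have "\<dots> = (\<Sum>l\<in>{1..2 * card C}. \<Sum>cs\<in>{cs \<in> ICHa j. length cs = l}. k * ?h cs)"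
  proof (rule sum.group[symmetric, OF finite_ICHa])
    show "finite {1..2 * card C}" by simp
    show "length ` ICHa j \<subseteq> {1..2 * card C}"
    proof
      fix l assume "l \<in> length ` ICHa j"
      then obtain cs where cs: "cs \<in> ICHa j" "l = length cs" by blast
      hence "chain C cs" "induced cs" unfolding ICHa_def by auto
      thus "l \<in> {1..2 * card C}" using ich_len cs(2) unfolding chain_def
        by (metis Suc_leI atLeastAtMost_iff length_greater_0_conv One_nat_def)
    qed
  qed
  also have "\<dots> \<le> (\<Sum>l\<in>{1..2 * card C}. (1/4) ^ l)"
  proof (rule sum_mono)
    fix l assume l: "l \<in> {1..2 * card C}"
    then obtain l' where l': "l = Suc l'" by (cases l) auto
    have "(\<Sum>cs\<in>{cs \<in> ICHa j. length cs = l}. k * ?h cs) = card {cs \<in> ICHa j. length cs = l} * (k * bb ^ ((l + 1) div 2))"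
      by simp
    also have "\<dots> \<le> card (CH j l) * (k * bb ^ ((l + 1) div 2))"
    proof (rule mult_right_mono)
      have "{cs \<in> ICHa j. length cs = l} \<subseteq> CH j l" unfolding ICHa_def CH_def by auto
      hence "card {cs \<in> ICHa j. length cs = l} \<le> card (CH j l)" using CH_fin by (rule card_mono[rotated])
      thus "real (card {cs \<in> ICHa j. length cs = l}) \<le> real (card (CH j l))" by (simp only: of_nat_le_iff)
    qed (use bb_nonneg in simp)
    also have "\<dots> \<le> (d * (k * d) ^ l') * (k * bb ^ ((l + 1) div 2))"
    proof (rule mult_right_mono)
      have "card (CH j l) \<le> d * (k * d) ^ l'" unfolding l' by (rule CH_card[OF jV])
      thus "real (card (CH j l)) \<le> real (d * (k * d) ^ l')" by (simp only: of_nat_le_iff)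
    qed (use bb_nonneg in simp)
    also have "\<dots> = real (k * d) ^ l * bb ^ ((l + 1) div 2)" unfolding l' by (simp add: algebra_simps)
    also have "\<dots> \<le> (1/4) ^ l" by (rule term_bound) (use l in auto)
    finally show "(\<Sum>cs\<in>{cs \<in> ICHa j. length cs = l}. k * ?h cs) \<le> (1/4) ^ l" .
  qed
  also have "\<dots> = (1 - (1/4) ^ (2 * card C)) / 3" by (rule geom4)
  also have "\<dots> \<le> 1/3" by simp
  finally show ?thesis .
qed

end


lemma Om_upd: "X \<in> Om M \<Longrightarrow> v \<in> M \<Longrightarrow> X(v := b) \<in> Om M"
  unfolding Om_def by (auto simp: PiE_def extensional_def)

lemma two_set:
  assumes X: "X \<in> Om M" and v: "v \<in> M"
  shows "{Y \<in> Om M. restrict Y (M - {v}) = restrict X (M - {v})} = {X(v := True), X(v := False)}"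
proof
  show "{X(v := True), X(v := False)} \<subseteq> {Y \<in> Om M. restrict Y (M - {v}) = restrict X (M - {v})}"
    using Om_upd[OF X v] by (auto simp: restrict_def fun_eq_iff)
  show "{Y \<in> Om M. restrict Y (M - {v}) = restrict X (M - {v})} \<subseteq> {X(v := True), X(v := False)}"
  proof
    fix Y assume Y: "Y \<in> {Y \<in> Om M. restrict Y (M - {v}) = restrict X (M - {v})}"
    have "Y = X(v := Y v)"
    proof
      fix u show "Y u = (X(v := Y v)) u"
      proof (cases "u = v")
        case False
        show ?thesis
        proof (cases "u \<in> M")
          case True
          hence uM: "u \<in> M - {v}" using False by simp
          have "restrict Y (M - {v}) u = restrict X (M - {v}) u" using Y by simp
          hence "Y u = X u" using uM by simp
          thus ?thesis using False by simp
        next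
          case nM: False thus ?thesis using Y X False unfolding Om_def by (auto simp: PiE_def extensional_def)
        qed
      qed simp
    qed
    thus "Y \<in> {X(v := True), X(v := False)}" by (cases "Y v") auto
  qed
qed

lemma upd_ne: "X(v := True) \<noteq> X(v := False)"
  by (metis fun_upd_same)

context formula
begin

definition qq :: "'v \<Rightarrow> ('v \<Rightarrow> bool) \<Rightarrow> bool \<Rightarrow> real" where
  "qq v X b = cond_marginal V C {v} (restrict (X(v := b)) {v}) (M - {v}) (restrict X (M - {v}))"

lemma restr_agree: "restrict X (M - {v}) = restrict X' (M - {v}) \<Longrightarrow> qq v X b = qq v X' b"
proof -
  assume a: "restrict X (M - {v}) = restrict X' (M - {v})"
  have "restrict (X(v := b)) {v} = restrict (X'(v := b)) {v}" by (auto simp: restrict_def fun_eq_iff)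
  thus ?thesis unfolding qq_def a by simp
qed

lemma num_set:
  assumes X: "X \<in> Om M" and v: "v \<in> M"
  shows "{\<omega> \<in> sat_assignments V C. restrict \<omega> {v} = restrict (X(v := b)) {v} \<and> restrict \<omega> (M - {v}) = restrict X (M - {v})}
       = {\<omega> \<in> ext V C (M - {v}) (restrict X (M - {v})). \<omega> v = b}"
  unfolding ext_def by (auto simp: restrict_def fun_eq_iff)

lemma num_set2:
  assumes X: "X \<in> Om M" and v: "v \<in> M"
  shows "{\<omega> \<in> sat_assignments V C. restrict \<omega> M = X(v := b)}
       = {\<omega> \<in> ext V C (M - {v}) (restrict X (M - {v})). \<omega> v = b}"
proof -
  have "restrict \<omega> M = X(v := b) \<longleftrightarrow> restrict \<omega> (M - {v}) = restrict X (M - {v}) \<and> \<omega> v = b" for \<omega>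
  proof
    assume e: "restrict \<omega> M = X(v := b)"
    have "restrict \<omega> M v = (X(v := b)) v" using e by simp
    hence "\<omega> v = b" using v by simp
    moreover have "restrict \<omega> (M - {v}) = restrict X (M - {v})"
    proof
      fix u show "restrict \<omega> (M - {v}) u = restrict X (M - {v}) u"
      proof (cases "u \<in> M - {v}")
        case True
        have "restrict \<omega> M u = (X(v := b)) u" using e by simp
        thus ?thesis using True by simp
      next
        case False thus ?thesis by auto
      qed
    qed
    ultimately show "restrict \<omega> (M - {v}) = restrict X (M - {v}) \<and> \<omega> v = b" by simp
  next
    assume a: "restrict \<omega> (M - {v}) = restrict X (M - {v}) \<and> \<omega> v = b"
    show "restrict \<omega> M = X(v := b)"
    proof
      fix u show "restrict \<omega> M u = (X(v := b)) u"
      proof (cases "u \<in> M")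
        case True
        show ?thesis
        proof (cases "u = v")
          case False
          have "restrict \<omega> (M - {v}) u = restrict X (M - {v}) u" using a by simp
          hence "\<omega> u = X u" using True False by simp
          thus ?thesis using True False by simp
        qed (use a True in simp)
      next
        case False thus ?thesis using X v unfolding Om_def by (auto simp: PiE_def extensional_def)
      qed
    qed
  qed
  thus ?thesis unfolding ext_def by auto
qed

definition EE :: "'v \<Rightarrow> ('v \<Rightarrow> bool) \<Rightarrow> ('v \<Rightarrow> bool) set" where
  "EE v X = ext V C (M - {v}) (restrict X (M - {v}))"

lemma finite_ext: "finite (ext V C A \<sigma>)"
  using finite_PiE[OF finV, of "\<lambda>_. UNIV :: bool set"]
  unfolding ext_def sat_assignments_def by (auto intro: finite_subset)

lemma finite_sat: "finite (sat_assignments V C)"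
  using finite_PiE[OF finV, of "\<lambda>_. UNIV :: bool set"]
  unfolding sat_assignments_def by (auto intro: finite_subset)

lemma EE_pos: "v \<in> M \<Longrightarrow> 0 < card (EE v X)"
  unfolding EE_def by (rule ext_pos) auto

lemma qq_eq:
  assumes X: "X \<in> Om M" and v: "v \<in> M"
  shows "qq v X b = card {\<omega> \<in> EE v X. \<omega> v = b} / card (EE v X)"
  unfolding qq_def cond_marginal_def num_set[OF X v] EE_def ext_def by simp

lemma qq_sum:
  assumes X: "X \<in> Om M" and v: "v \<in> M"
  shows "qq v X True + qq v X False = 1"
proof -
  have "card {\<omega> \<in> EE v X. \<omega> v = True} + card {\<omega> \<in> EE v X. \<omega> v = False} = card (EE v X)"
  proof -
    have e: "EE v X = {\<omega> \<in> EE v X. \<omega> v = True} \<union> {\<omega> \<in> EE v X. \<omega> v = False}" by auto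
    have f: "finite (EE v X)" unfolding EE_def by (rule finite_ext)
    have "card ({\<omega> \<in> EE v X. \<omega> v = True} \<union> {\<omega> \<in> EE v X. \<omega> v = False}) = card {\<omega> \<in> EE v X. \<omega> v = True} + card {\<omega> \<in> EE v X. \<omega> v = False}"
      by (rule card_Un_disjoint) (use f in auto)
    thus ?thesis using e by simp
  qed
  hence "real (card {\<omega> \<in> EE v X. \<omega> v = True}) + real (card {\<omega> \<in> EE v X. \<omega> v = False}) = real (card (EE v X))"
    using arg_cong[of _ _ real] by simp
  thus ?thesis unfolding qq_eq[OF X v] using EE_pos[OF v, of X] by (simp add: field_simps)
qed

lemma qq_nonneg: "0 \<le> qq v X b"
  unfolding qq_def cond_marginal_def by simp

lemma qq_le1: assumes X: "X \<in> Om M" and v: "v \<in> M" shows "qq v X b \<le> 1"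
  using qq_sum[OF X v] qq_nonneg[of v X True] qq_nonneg[of v X False] by (cases b) auto

definition Nf :: "('v \<Rightarrow> bool) \<Rightarrow> nat" where
  "Nf Y = card {\<omega> \<in> sat_assignments V C. restrict \<omega> M = Y}"

definition Zs :: nat where "Zs = card (sat_assignments V C)"

lemma marginal_eq: "marginal V C M Y = Nf Y / Zs"
  unfolding marginal_def Nf_def Zs_def ..

lemma Nf_upd:
  assumes X: "X \<in> Om M" and v: "v \<in> M"
  shows "Nf (X(v := b)) = card {\<omega> \<in> EE v X. \<omega> v = b}"
  unfolding Nf_def num_set2[OF X v] EE_def ..

lemma glauber_eq:
  assumes X: "X \<in> Om M" and Y: "Y \<in> Om M"
  shows "glauber V C M X Y = (1 / real (card M)) *
     (\<Sum>v\<in>M. if restrict Y (M - {v}) = restrict X (M - {v}) then qq v X (Y v) else 0)"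
proof -
  have "cond_marginal V C {v} (restrict Y {v}) (M - {v}) (restrict X (M - {v})) = qq v X (Y v)" for v
  proof -
    have "restrict Y {v} = restrict (X(v := Y v)) {v}" by (auto simp: restrict_def fun_eq_iff)
    thus ?thesis unfolding qq_def by simp
  qed
  hence "(\<Sum>v\<in>M. if restrict Y (M - {v}) = restrict X (M - {v}) then cond_marginal V C {v} (restrict Y {v}) (M - {v}) (restrict X (M - {v})) else 0)
      = (\<Sum>v\<in>M. if restrict Y (M - {v}) = restrict X (M - {v}) then qq v X (Y v) else 0)"
    by (intro sum.cong) auto
  moreover have "X \<in> M \<rightarrow>\<^sub>E UNIV" "Y \<in> M \<rightarrow>\<^sub>E UNIV" using X Y unfolding Om_def by auto
  ultimately show ?thesis unfolding glauber_def by simp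
qed

lemma sum_two:
  assumes X: "X \<in> Om M" and v: "v \<in> M"
  shows "(\<Sum>Y\<in>Om M. if restrict Y (M - {v}) = restrict X (M - {v}) then g Y else 0) = g (X(v := True)) + g (X(v := False))"
proof -
  have fin: "finite (Om M)" using MV finV finite_subset finite_Om by blast
  have "(\<Sum>Y\<in>Om M. if restrict Y (M - {v}) = restrict X (M - {v}) then g Y else 0)
      = (\<Sum>Y\<in>{Y \<in> Om M. restrict Y (M - {v}) = restrict X (M - {v})}. g Y)"
    using fin by (simp add: sum.inter_filter)
  also have "\<dots> = g (X(v := True)) + g (X(v := False))"
    unfolding two_set[OF X v] using upd_ne[of X v] by simp
  finally show ?thesis .
qed

lemma op_eq:
  assumes X: "X \<in> Om M"
  shows "(\<Sum>Y\<in>Om M. glauber V C M X Y * f Y) =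
     (1 / real (card M)) * (\<Sum>v\<in>M. qq v X True * f (X(v := True)) + qq v X False * f (X(v := False)))"
proof -
  let ?c = "\<lambda>Y v. restrict Y (M - {v}) = restrict X (M - {v})"
  have "(\<Sum>Y\<in>Om M. glauber V C M X Y * f Y) =
     (\<Sum>Y\<in>Om M. (1 / real (card M)) * (\<Sum>v\<in>M. (if ?c Y v then qq v X (Y v) else 0)) * f Y)"
    by (rule sum.cong) (auto simp: glauber_eq[OF X])
  also have "\<dots> = (1 / real (card M)) * (\<Sum>Y\<in>Om M. \<Sum>v\<in>M. (if ?c Y v then qq v X (Y v) else 0) * f Y)"
    by (simp only: sum_distrib_left sum_distrib_right mult.assoc)
  also have "\<dots> = (1 / real (card M)) * (\<Sum>v\<in>M. \<Sum>Y\<in>Om M. (if ?c Y v then qq v X (Y v) else 0) * f Y)"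
    by (subst sum.swap) (rule refl)
  also have "\<dots> = (1 / real (card M)) * (\<Sum>v\<in>M. qq v X True * f (X(v := True)) + qq v X False * f (X(v := False)))"
  proof -
    have "(\<Sum>Y\<in>Om M. (if ?c Y v then qq v X (Y v) else 0) * f Y) = qq v X True * f (X(v := True)) + qq v X False * f (X(v := False))"
      if v: "v \<in> M" for v
    proof -
      have "(\<Sum>Y\<in>Om M. (if ?c Y v then qq v X (Y v) else 0) * f Y) = (\<Sum>Y\<in>Om M. if ?c Y v then qq v X (Y v) * f Y else 0)"
        by (rule sum.cong) auto
      also have "\<dots> = qq v X True * f (X(v := True)) + qq v X False * f (X(v := False))"
        by (subst sum_two[OF X v]) simp
      finally show ?thesis .
    qed
    thus ?thesis by simp
  qed
  finally show ?thesis .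
qed

lemma Zs_pos: "0 < Zs" if "sat_assignments V C \<noteq> {}"
  using that finite_sat unfolding Zs_def by (simp add: card_gt_0_iff)

lemma stationary:
  assumes Y: "Y \<in> Om M" and M1: "M \<noteq> {}"
  shows "(\<Sum>X\<in>Om M. marginal V C M X * glauber V C M X Y) = marginal V C M Y"
proof -
  have finM: "finite M" using MV finV finite_subset by blast
  have inner: "(\<Sum>X\<in>Om M. marginal V C M X * (if restrict Y (M - {v}) = restrict X (M - {v}) then qq v X (Y v) else 0))
      = marginal V C M Y" if v: "v \<in> M" for v
  proof -
    have "(\<Sum>X\<in>Om M. marginal V C M X * (if restrict Y (M - {v}) = restrict X (M - {v}) then qq v X (Y v) else 0))
       = (\<Sum>X\<in>Om M. if restrict X (M - {v}) = restrict Y (M - {v}) then marginal V C M X * qq v X (Y v) else 0)"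
      by (rule sum.cong) auto
    also have "\<dots> = marginal V C M (Y(v := True)) * qq v (Y(v := True)) (Y v) + marginal V C M (Y(v := False)) * qq v (Y(v := False)) (Y v)"
      by (rule sum_two[OF Y v])
    also have "\<dots> = (marginal V C M (Y(v := True)) + marginal V C M (Y(v := False))) * qq v Y (Y v)"
    proof -
      have "qq v (Y(v := b)) (Y v) = qq v Y (Y v)" for b
        by (rule restr_agree) (auto simp: restrict_def fun_eq_iff)
      thus ?thesis by (simp add: algebra_simps)
    qed
    also have "\<dots> = (card (EE v Y) / Zs) * (card {\<omega> \<in> EE v Y. \<omega> v = Y v} / card (EE v Y))"
    proof -
      have "Nf (Y(v := True)) + Nf (Y(v := False)) = card {\<omega> \<in> EE v Y. \<omega> v = True} + card {\<omega> \<in> EE v Y. \<omega> v = False}"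
        using Nf_upd[OF Y v] by simp
      also have "\<dots> = card (EE v Y)"
      proof -
        have e: "EE v Y = {\<omega> \<in> EE v Y. \<omega> v = True} \<union> {\<omega> \<in> EE v Y. \<omega> v = False}" by auto
        have f: "finite (EE v Y)" unfolding EE_def by (rule finite_ext)
        have "card ({\<omega> \<in> EE v Y. \<omega> v = True} \<union> {\<omega> \<in> EE v Y. \<omega> v = False}) = card {\<omega> \<in> EE v Y. \<omega> v = True} + card {\<omega> \<in> EE v Y. \<omega> v = False}"
          by (rule card_Un_disjoint) (use f in auto)
        thus ?thesis using e by simp
      qed
      finally have "real (Nf (Y(v := True))) + real (Nf (Y(v := False))) = real (card (EE v Y))"
        using arg_cong[of _ _ real] by simp
      thus ?thesis unfolding marginal_eq qq_eq[OF Y v] by (simp add: add_divide_distrib[symmetric])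
    qed
    also have "\<dots> = card {\<omega> \<in> EE v Y. \<omega> v = Y v} / Zs" using EE_pos[OF v, of Y] by simp
    also have "\<dots> = marginal V C M Y"
    proof -
      have "Nf (Y(v := Y v)) = card {\<omega> \<in> EE v Y. \<omega> v = Y v}" by (rule Nf_upd[OF Y v])
      thus ?thesis unfolding marginal_eq by simp
    qed
    finally show ?thesis .
  qed
  let ?c = "\<lambda>X v. restrict Y (M - {v}) = restrict X (M - {v})"
  have "(\<Sum>X\<in>Om M. marginal V C M X * glauber V C M X Y)
      = (\<Sum>X\<in>Om M. marginal V C M X * ((1 / real (card M)) * (\<Sum>v\<in>M. (if ?c X v then qq v X (Y v) else 0))))"
    by (rule sum.cong) (auto simp: glauber_eq[OF _ Y])
  also have "\<dots> = (1 / real (card M)) * (\<Sum>X\<in>Om M. \<Sum>v\<in>M. marginal V C M X * (if ?c X v then qq v X (Y v) else 0))"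
    by (simp only: sum_distrib_left mult.assoc mult.left_commute)
  also have "\<dots> = (1 / real (card M)) * (\<Sum>v\<in>M. \<Sum>X\<in>Om M. marginal V C M X * (if ?c X v then qq v X (Y v) else 0))"
    by (subst sum.swap) (rule refl)
  also have "\<dots> = (1 / real (card M)) * (\<Sum>v\<in>M. marginal V C M Y)" using inner by simp
  also have "\<dots> = marginal V C M Y" using M1 finM by simp
  finally show ?thesis .
qed

lemma marg_sum: "sat_assignments V C \<noteq> {} \<Longrightarrow> (\<Sum>X\<in>Om M. marginal V C M X) = 1"
proof -
  assume ne: "sat_assignments V C \<noteq> {}"
  have fin: "finite (Om M)" using MV finV finite_subset finite_Om by blast
  have img: "(\<lambda>\<omega>. restrict \<omega> M) ` sat_assignments V C \<subseteq> Om M" unfolding Om_def by auto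
  have "(\<Sum>X\<in>Om M. real (Nf X)) = (\<Sum>X\<in>Om M. \<Sum>\<omega>\<in>{\<omega> \<in> sat_assignments V C. restrict \<omega> M = X}. 1)"
    unfolding Nf_def by simp
  also have "\<dots> = (\<Sum>\<omega>\<in>sat_assignments V C. 1)"
    by (rule sum.group[OF finite_sat fin img])
  also have "\<dots> = real Zs" unfolding Zs_def by simp
  finally have "(\<Sum>X\<in>Om M. real (Nf X)) = real Zs" .
  thus ?thesis unfolding marginal_eq using Zs_pos[OF ne] by (simp add: sum_divide_distrib[symmetric])
qed

lemma marg_nonneg: "0 \<le> marginal V C M X" unfolding marginal_def by simp

end


definition flp :: "'v \<Rightarrow> ('v \<Rightarrow> bool) \<Rightarrow> ('v \<Rightarrow> bool)" where
  "flp j X = X(j := \<not> X j)"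

lemma flp_Om: "X \<in> Om M \<Longrightarrow> j \<in> M \<Longrightarrow> flp j X \<in> Om M"
  unfolding flp_def by (rule Om_upd)

definition Lc :: "'v set \<Rightarrow> (('v \<Rightarrow> bool) \<Rightarrow> real) \<Rightarrow> real" where
  "Lc M f = Max (insert 0 ((\<lambda>(X, j). \<bar>f X - f (flp j X)\<bar>) ` (Om M \<times> M)))"

lemma Lc_ge:
  assumes "finite M" "X \<in> Om M" "j \<in> M"
  shows "\<bar>f X - f (flp j X)\<bar> \<le> Lc M f"
  unfolding Lc_def by (rule Max_ge) (use assms finite_Om in auto)

lemma Lc_nonneg: "finite M \<Longrightarrow> 0 \<le> Lc M f"
  unfolding Lc_def by (rule Max_ge) (auto simp: finite_Om)

lemma Lc_le:
  assumes "finite M" "0 \<le> c" "\<And>X j. X \<in> Om M \<Longrightarrow> j \<in> M \<Longrightarrow> \<bar>f X - f (flp j X)\<bar> \<le> c"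
  shows "Lc M f \<le> c"
proof -
  have "finite ((\<lambda>(X, j). \<bar>f X - f (flp j X)\<bar>) ` (Om M \<times> M))"
    using assms(1) finite_Om by blast
  thus ?thesis unfolding Lc_def by (subst Max_le_iff) (use assms in auto)
qed

lemma Lc_cong:
  assumes "\<And>X. X \<in> Om M \<Longrightarrow> f X = g X"
  shows "Lc M f = Lc M g"
proof -
  have "(\<lambda>(X, j). \<bar>f X - f (flp j X)\<bar>) ` (Om M \<times> M) = (\<lambda>(X, j). \<bar>g X - g (flp j X)\<bar>) ` (Om M \<times> M)"
    by (rule image_cong) (auto simp: assms flp_Om)
  thus ?thesis unfolding Lc_def by simp
qed

lemma Lc_dist_aux:
  assumes finM: "finite M" and S: "finite S"
  shows "X \<in> Om M \<Longrightarrow> Y \<in> Om M \<Longrightarrow> (\<forall>u\<in>M - S. X u = Y u) \<Longrightarrow> \<bar>f X - f Y\<bar> \<le> card S * Lc M f"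
  using S
proof (induction S arbitrary: X rule: finite_induct)
  case empty
  have "X = Y"
  proof
    fix u show "X u = Y u"
      using empty.prems unfolding Om_def by (cases "u \<in> M") (auto simp: PiE_def extensional_def)
  qed
  thus ?case by simp
next
  case (insert a S)
  show ?case
  proof (cases "a \<in> M \<and> X a \<noteq> Y a")
    case False
    hence "\<forall>u\<in>M - S. X u = Y u" using insert.prems(3) by auto
    hence "\<bar>f X - f Y\<bar> \<le> card S * Lc M f" using insert.IH insert.prems by blast
    also have "\<dots> \<le> card (insert a S) * Lc M f"
      using insert.hyps Lc_nonneg[OF finM, of f] by (intro mult_right_mono) auto
    finally show ?thesis .
  next
    case True
    define Z where "Z = flp a X"
    have Z: "Z \<in> Om M" unfolding Z_def using insert.prems(1) True by (simp add: flp_Om)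
    have "\<forall>u\<in>M - S. Z u = Y u" using insert.prems(3) True unfolding Z_def flp_def by auto
    hence h1: "\<bar>f Z - f Y\<bar> \<le> card S * Lc M f" using insert.IH[OF Z insert.prems(2)] by blast
    have h2: "\<bar>f X - f Z\<bar> \<le> Lc M f" unfolding Z_def using Lc_ge[OF finM insert.prems(1)] True by blast
    have "\<bar>f X - f Y\<bar> \<le> \<bar>f X - f Z\<bar> + \<bar>f Z - f Y\<bar>" by simp
    also have "\<dots> \<le> Lc M f + card S * Lc M f" using h1 h2 by simp
    also have "\<dots> = card (insert a S) * Lc M f" using insert.hyps by (simp add: algebra_simps)
    finally show ?thesis .
  qed
qed

lemma Lc_dist:
  assumes "finite M" "X \<in> Om M" "Y \<in> Om M"
  shows "\<bar>f X - f Y\<bar> \<le> card M * Lc M f"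
  using Lc_dist_aux[OF assms(1) assms(1) assms(2,3)] by simp

context formula
begin

lemma finM: "finite M" using MV finV finite_subset by blast

lemma Dsum:
  assumes X: "X \<in> Om M" and j: "j \<in> M"
  shows "(\<Sum>v\<in>M - {j}. \<bar>qq v X True - qq v (flp j X) True\<bar>) \<le> 1/3"
proof -
  have each: "\<bar>qq v X True - qq v (flp j X) True\<bar> \<le> (\<Sum>cs\<in>ICH j v. bb ^ ((length cs + 1) div 2))"
    if v: "v \<in> M - {j}" for v
  proof -
    define A where "A = M - {v}"
    define s1 where "s1 = restrict X A"
    define s0 where "s0 = restrict (flp j X) A"
    have vM: "v \<in> M" and vj: "v \<noteq> j" using v by auto
    have AM: "A \<subseteq> M" unfolding A_def by blast
    have s1A: "s1 \<in> A \<rightarrow>\<^sub>E (UNIV::bool set)" unfolding s1_def by simp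
    have s0A: "s0 \<in> A \<rightarrow>\<^sub>E (UNIV::bool set)" unfolding s0_def by simp
    have ag: "s1 u = s0 u" if "u \<in> A" "u \<noteq> j" for u using that unfolding s1_def s0_def flp_def by simp
    let ?E1 = "ext V C A s1" and ?E0 = "ext V C A s0"
    have sw: "\<bar>real (card ?E0 * card {\<omega>\<in>?E1. \<omega> v}) - real (card ?E1 * card {\<omega>\<in>?E0. \<omega> v})\<bar>
          \<le> card {pr \<in> ?E1 \<times> ?E0. v \<in> Kset C j (fst pr) (snd pr)}"
      by (rule swap_bound) (use AM MV s1A s0A ag finV in auto)
    have pv: "real (card {pr \<in> ?E1 \<times> ?E0. v \<in> Kset C j (fst pr) (snd pr)})
       \<le> (\<Sum>cs\<in>ICH j v. bb ^ ((length cs + 1) div 2)) * card ?E1 * card ?E0"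
      by (rule per_v[OF vj AM s1A s0A])
    have e1: "EE v X = ?E1" unfolding EE_def s1_def A_def ..
    have e0: "EE v (flp j X) = ?E0" unfolding EE_def s0_def A_def ..
    have p1: "0 < card ?E1" and p0: "0 < card ?E0" using EE_pos[OF vM] e1 e0 by metis+
    have q1: "qq v X True = card {\<omega>\<in>?E1. \<omega> v} / card ?E1"
      using qq_eq[OF X vM, of True] e1 by simp
    have q0: "qq v (flp j X) True = card {\<omega>\<in>?E0. \<omega> v} / card ?E0"
      using qq_eq[OF flp_Om[OF X j] vM, of True] e0 by simp
    have "qq v X True - qq v (flp j X) True
        = (real (card ?E0 * card {\<omega>\<in>?E1. \<omega> v}) - real (card ?E1 * card {\<omega>\<in>?E0. \<omega> v})) / (card ?E1 * card ?E0)"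
      unfolding q1 q0 using p1 p0 by (simp add: field_simps)
    hence "\<bar>qq v X True - qq v (flp j X) True\<bar>
        = \<bar>real (card ?E0 * card {\<omega>\<in>?E1. \<omega> v}) - real (card ?E1 * card {\<omega>\<in>?E0. \<omega> v})\<bar> / (card ?E1 * card ?E0)"
      by simp
    also have "\<dots> \<le> ((\<Sum>cs\<in>ICH j v. bb ^ ((length cs + 1) div 2)) * card ?E1 * card ?E0) / (card ?E1 * card ?E0)"
      using sw pv p1 p0 by (intro divide_right_mono) auto
    also have "\<dots> = (\<Sum>cs\<in>ICH j v. bb ^ ((length cs + 1) div 2))" using p1 p0 by simp
    finally show ?thesis .
  qed
  have "(\<Sum>v\<in>M - {j}. \<bar>qq v X True - qq v (flp j X) True\<bar>) \<le> (\<Sum>v\<in>M - {j}. \<Sum>cs\<in>ICH j v. bb ^ ((length cs + 1) div 2))"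
    by (rule sum_mono) (rule each)
  also have "\<dots> \<le> 1/3" by (rule total) (use j MV in auto)
  finally show ?thesis .
qed

end


context formula
begin

definition opf :: "(('v \<Rightarrow> bool) \<Rightarrow> real) \<Rightarrow> ('v \<Rightarrow> bool) \<Rightarrow> real" where
  "opf f X = (\<Sum>Y\<in>Om M. glauber V C M X Y * f Y)"

definition KK :: "(('v \<Rightarrow> bool) \<Rightarrow> real) \<Rightarrow> ('v \<Rightarrow> bool) \<Rightarrow> 'v \<Rightarrow> real" where
  "KK f X v = qq v X True * f (X(v := True)) + qq v X False * f (X(v := False))"

lemma Kdiff:
  assumes X: "X \<in> Om M" and j: "j \<in> M" and v: "v \<in> M" and vj: "v \<noteq> j"
  shows "\<bar>KK f X v - KK f (flp j X) v\<bar> \<le> Lc M f + \<bar>qq v X True - qq v (flp j X) True\<bar> * Lc M f"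
proof -
  define X' where "X' = flp j X"
  have X': "X' \<in> Om M" unfolding X'_def by (rule flp_Om[OF X j])
  define q where "q = qq v X True"
  define q' where "q' = qq v X' True"
  define L where "L = Lc M f"
  define a where "a = f (X(v := True))"
  define b where "b = f (X(v := False))"
  define a' where "a' = f (X'(v := True))"
  define b' where "b' = f (X'(v := False))"
  have qF: "qq v X False = 1 - q" unfolding q_def using qq_sum[OF X v] by simp
  have qF': "qq v X' False = 1 - q'" unfolding q'_def using qq_sum[OF X' v] by simp
  have q01: "0 \<le> q" "q \<le> 1" unfolding q_def using qq_nonneg qq_le1[OF X v] by auto
  have sw: "X'(v := c) = flp j (X(v := c))" for c unfolding X'_def flp_def using vj by (auto simp: fun_eq_iff)
  have haa: "\<bar>a - a'\<bar> \<le> L" unfolding a_def a'_def L_def sw by (rule Lc_ge[OF finM Om_upd[OF X v] j])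
  have hbb: "\<bar>b - b'\<bar> \<le> L" unfolding b_def b'_def L_def sw by (rule Lc_ge[OF finM Om_upd[OF X v] j])
  have fv: "X'(v := False) = flp v (X'(v := True))" unfolding flp_def by simp
  have hab: "\<bar>a' - b'\<bar> \<le> L" unfolding a'_def b'_def L_def fv by (rule Lc_ge[OF finM Om_upd[OF X' v] v])
  have eq: "KK f X v - KK f X' v = q * (a - a') + (1 - q) * (b - b') + (q - q') * (a' - b')"
    unfolding KK_def qF qF' a_def b_def a'_def b'_def q_def q'_def by (simp add: algebra_simps)
  have t1: "\<bar>q * (a - a')\<bar> \<le> q * L" using q01 haa by (simp add: abs_mult mult_left_mono)
  have t2: "\<bar>(1 - q) * (b - b')\<bar> \<le> (1 - q) * L" using q01 hbb by (simp add: abs_mult mult_left_mono)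
  have t3: "\<bar>(q - q') * (a' - b')\<bar> \<le> \<bar>q - q'\<bar> * L" using hab by (simp add: abs_mult mult_left_mono)
  have "\<bar>KK f X v - KK f X' v\<bar> \<le> \<bar>q * (a - a')\<bar> + \<bar>(1 - q) * (b - b')\<bar> + \<bar>(q - q') * (a' - b')\<bar>"
    unfolding eq by (rule order_trans[OF abs_triangle_ineq add_right_mono[OF abs_triangle_ineq]])
  also have "\<dots> \<le> q * L + (1 - q) * L + \<bar>q - q'\<bar> * L" using t1 t2 t3 by linarith
  also have "\<dots> = L + \<bar>q - q'\<bar> * L" by (simp add: algebra_simps)
  finally show ?thesis unfolding L_def q_def q'_def X'_def .
qed

lemma Kj:
  assumes X: "X \<in> Om M" and j: "j \<in> M"
  shows "KK f X j = KK f (flp j X) j"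
proof -
  have r: "restrict X (M - {j}) = restrict (flp j X) (M - {j})" unfolding flp_def by (auto simp: restrict_def fun_eq_iff)
  have u: "(flp j X)(j := c) = X(j := c)" for c unfolding flp_def by simp
  show ?thesis unfolding KK_def u restr_agree[OF r] ..
qed

lemma contraction:
  assumes M0: "M \<noteq> {}"
  shows "Lc M (opf f) \<le> (1 - 1 / (2 * card M)) * Lc M f"
proof (rule Lc_le[OF finM])
  have m1: "1 \<le> card M" using M0 finM by (simp add: Suc_le_eq card_gt_0_iff)
  hence "1 / (2 * real (card M)) \<le> 1" by simp
  thus "0 \<le> (1 - 1 / (2 * card M)) * Lc M f" using Lc_nonneg[OF finM] by simp
  fix X j assume X: "X \<in> Om M" and j: "j \<in> M"
  let ?m = "real (card M)"
  let ?L = "Lc M f"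
  have L0: "0 \<le> ?L" by (rule Lc_nonneg[OF finM])
  have o1: "opf f X = (1 / ?m) * (\<Sum>v\<in>M. KK f X v)" unfolding opf_def KK_def by (rule op_eq[OF X])
  have o2: "opf f (flp j X) = (1 / ?m) * (\<Sum>v\<in>M. KK f (flp j X) v)" unfolding opf_def KK_def by (rule op_eq[OF flp_Om[OF X j]])
  have "(\<Sum>v\<in>M. KK f X v) - (\<Sum>v\<in>M. KK f (flp j X) v) = (\<Sum>v\<in>M. KK f X v - KK f (flp j X) v)"
    by (simp add: sum_subtractf)
  also have "\<dots> = (\<Sum>v\<in>M - {j}. KK f X v - KK f (flp j X) v)"
    using Kj[OF X j] j finM by (simp add: sum.remove)
  finally have d: "(\<Sum>v\<in>M. KK f X v) - (\<Sum>v\<in>M. KK f (flp j X) v) = (\<Sum>v\<in>M - {j}. KK f X v - KK f (flp j X) v)" .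
  have "\<bar>\<Sum>v\<in>M - {j}. KK f X v - KK f (flp j X) v\<bar> \<le> (\<Sum>v\<in>M - {j}. \<bar>KK f X v - KK f (flp j X) v\<bar>)"
    by (rule sum_abs)
  also have "\<dots> \<le> (\<Sum>v\<in>M - {j}. ?L + \<bar>qq v X True - qq v (flp j X) True\<bar> * ?L)"
    by (rule sum_mono) (rule Kdiff[OF X j], auto)
  also have "\<dots> = (card M - 1) * ?L + (\<Sum>v\<in>M - {j}. \<bar>qq v X True - qq v (flp j X) True\<bar>) * ?L"
    using j finM by (simp add: sum.distrib sum_distrib_right card_Diff_singleton)
  also have "\<dots> \<le> (card M - 1) * ?L + (1/3) * ?L"
    using Dsum[OF X j] L0 by (intro add_left_mono mult_right_mono) auto
  finally have b: "\<bar>\<Sum>v\<in>M - {j}. KK f X v - KK f (flp j X) v\<bar> \<le> (real (card M - 1) + 1/3) * ?L"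
    by (simp add: algebra_simps)
  have "\<bar>opf f X - opf f (flp j X)\<bar> = (1 / ?m) * \<bar>\<Sum>v\<in>M - {j}. KK f X v - KK f (flp j X) v\<bar>"
  proof -
    have "opf f X - opf f (flp j X) = (1 / ?m) * ((\<Sum>v\<in>M. KK f X v) - (\<Sum>v\<in>M. KK f (flp j X) v))"
      unfolding o1 o2 by (simp add: right_diff_distrib)
    thus ?thesis unfolding d by (simp add: abs_mult)
  qed
  also have "\<dots> \<le> (1 / ?m) * ((real (card M - 1) + 1/3) * ?L)"
    using b by (intro mult_left_mono) auto
  also have "\<dots> \<le> (1 - 1 / (2 * ?m)) * ?L"
  proof -
    have "real (card M - 1) = ?m - 1" using m1 by simp
    hence "(1 / ?m) * ((real (card M - 1) + 1/3) * ?L) = (1 - 2 / (3 * ?m)) * ?L"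
      using m1 by (simp add: field_simps)
    also have "\<dots> \<le> (1 - 1 / (2 * ?m)) * ?L"
      using m1 L0 by (intro mult_right_mono) (auto simp: field_simps)
    finally show ?thesis .
  qed
  finally show "\<bar>opf f X - opf f (flp j X)\<bar> \<le> (1 - 1 / (2 * card M)) * Lc M f" by simp
qed

end


context formula
begin

definition Pf :: "nat \<Rightarrow> (('v \<Rightarrow> bool) \<Rightarrow> real) \<Rightarrow> ('v \<Rightarrow> bool) \<Rightarrow> real" where
  "Pf t f X = (\<Sum>Y\<in>Om M. kernel_pow (Om M) (glauber V C M) t X Y * f Y)"

lemma finOm: "finite (Om M)" using finM finite_Om by blast

lemma Pf_Suc: "Pf (Suc t) f X = Pf t (opf f) X"
proof -
  let ?k = "kernel_pow (Om M) (glauber V C M)"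
  have "Pf (Suc t) f X = (\<Sum>Y\<in>Om M. \<Sum>Z\<in>Om M. ?k t X Z * glauber V C M Z Y * f Y)"
    unfolding Pf_def by (simp add: sum_distrib_right)
  also have "\<dots> = (\<Sum>Z\<in>Om M. \<Sum>Y\<in>Om M. ?k t X Z * glauber V C M Z Y * f Y)"
    by (rule sum.swap)
  also have "\<dots> = Pf t (opf f) X"
    unfolding Pf_def opf_def by (simp add: sum_distrib_left mult.assoc)
  finally show ?thesis .
qed

lemma Pf_0: "X \<in> Om M \<Longrightarrow> Pf 0 f X = f X"
proof -
  assume X: "X \<in> Om M"
  have "Pf 0 f X = (\<Sum>Y\<in>Om M. if X = Y then f Y else 0)" unfolding Pf_def by (rule sum.cong) auto
  also have "\<dots> = f X" using X finOm by simp
  finally show ?thesis .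
qed

definition rr :: real where "rr = 1 - 1 / (2 * card M)"

lemma rr_nonneg: "0 \<le> rr"
proof -
  have "1 / (2 * real (card M)) \<le> 1"
  proof (cases "card M = 0")
    case False thus ?thesis by (simp add: field_simps)
  qed simp
  thus ?thesis unfolding rr_def by simp
qed

lemma Lc_Pf: "M \<noteq> {} \<Longrightarrow> Lc M (Pf t f) \<le> rr ^ t * Lc M f"
proof (induction t arbitrary: f)
  case 0
  have "Lc M (Pf 0 f) = Lc M f" by (rule Lc_cong) (rule Pf_0)
  thus ?case by simp
next
  case (Suc t)
  have "Pf (Suc t) f = Pf t (opf f)" by (rule ext) (rule Pf_Suc)
  hence "Lc M (Pf (Suc t) f) = Lc M (Pf t (opf f))" by simp
  also have "\<dots> \<le> rr ^ t * Lc M (opf f)" by (rule Suc.IH[OF Suc.prems])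
  also have "\<dots> \<le> rr ^ t * (rr * Lc M f)"
    using contraction[OF Suc.prems, of f] rr_nonneg unfolding rr_def by (intro mult_left_mono) auto
  finally show ?case by (simp add: mult.assoc mult.commute mult.left_commute)
qed

lemma stat_Pf:
  assumes M0: "M \<noteq> {}"
  shows "(\<Sum>X\<in>Om M. marginal V C M X * Pf t f X) = (\<Sum>X\<in>Om M. marginal V C M X * f X)"
proof (induction t arbitrary: f)
  case 0 show ?case by (rule sum.cong) (auto simp: Pf_0)
next
  case (Suc t)
  have "(\<Sum>X\<in>Om M. marginal V C M X * Pf (Suc t) f X) = (\<Sum>X\<in>Om M. marginal V C M X * Pf t (opf f) X)"
    by (simp add: Pf_Suc)
  also have "\<dots> = (\<Sum>X\<in>Om M. marginal V C M X * opf f X)" by (rule Suc.IH)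
  also have "\<dots> = (\<Sum>X\<in>Om M. \<Sum>Y\<in>Om M. marginal V C M X * glauber V C M X Y * f Y)"
    unfolding opf_def by (simp add: sum_distrib_left mult.assoc)
  also have "\<dots> = (\<Sum>Y\<in>Om M. \<Sum>X\<in>Om M. marginal V C M X * glauber V C M X Y * f Y)"
    by (rule sum.swap)
  also have "\<dots> = (\<Sum>Y\<in>Om M. (\<Sum>X\<in>Om M. marginal V C M X * glauber V C M X Y) * f Y)"
    by (simp add: sum_distrib_right)
  also have "\<dots> = (\<Sum>Y\<in>Om M. marginal V C M Y * f Y)"
    by (rule sum.cong) (auto simp: stationary[OF _ M0])
  finally show ?case .
qed

lemma dev_bound:
  assumes ne: "sat_assignments V C \<noteq> {}" and M0: "M \<noteq> {}" and X0: "X0 \<in> Om M"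
    and g: "\<And>Y. 0 \<le> g Y" "\<And>Y. g Y \<le> 1"
  shows "\<bar>Pf t g X0 - (\<Sum>X\<in>Om M. marginal V C M X * g X)\<bar> \<le> card M * rr ^ t"
proof -
  let ?\<pi> = "marginal V C M"
  have Lg: "Lc M g \<le> 1"
  proof (rule Lc_le[OF finM])
    fix X j show "\<bar>g X - g (flp j X)\<bar> \<le> 1" using g[of X] g[of "flp j X"] by (simp add: abs_le_iff)
  qed simp
  have LP: "Lc M (Pf t g) \<le> rr ^ t"
  proof -
    have "Lc M (Pf t g) \<le> rr ^ t * Lc M g" by (rule Lc_Pf[OF M0])
    also have "\<dots> \<le> rr ^ t * 1" using Lg rr_nonneg by (intro mult_left_mono) auto
    finally show ?thesis by simp
  qed
  have "Pf t g X0 - (\<Sum>X\<in>Om M. ?\<pi> X * g X) = (\<Sum>X\<in>Om M. ?\<pi> X) * Pf t g X0 - (\<Sum>X\<in>Om M. ?\<pi> X * Pf t g X)"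
    using marg_sum[OF ne] stat_Pf[OF M0, of t g] by simp
  also have "\<dots> = (\<Sum>X\<in>Om M. ?\<pi> X * (Pf t g X0 - Pf t g X))"
    by (simp add: sum_distrib_right right_diff_distrib sum_subtractf)
  finally have e: "Pf t g X0 - (\<Sum>X\<in>Om M. ?\<pi> X * g X) = (\<Sum>X\<in>Om M. ?\<pi> X * (Pf t g X0 - Pf t g X))" .
  have "\<bar>\<Sum>X\<in>Om M. ?\<pi> X * (Pf t g X0 - Pf t g X)\<bar> \<le> (\<Sum>X\<in>Om M. \<bar>?\<pi> X * (Pf t g X0 - Pf t g X)\<bar>)"
    by (rule sum_abs)
  also have "\<dots> \<le> (\<Sum>X\<in>Om M. ?\<pi> X * (card M * rr ^ t))"
  proof (rule sum_mono)
    fix X assume X: "X \<in> Om M"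
    have "\<bar>Pf t g X0 - Pf t g X\<bar> \<le> card M * Lc M (Pf t g)" by (rule Lc_dist[OF finM X0 X])
    also have "\<dots> \<le> card M * rr ^ t" using LP by (intro mult_left_mono) auto
    finally show "\<bar>?\<pi> X * (Pf t g X0 - Pf t g X)\<bar> \<le> ?\<pi> X * (card M * rr ^ t)"
      using marg_nonneg[of X] by (simp add: abs_mult mult_left_mono)
  qed
  also have "\<dots> = card M * rr ^ t" using marg_sum[OF ne] by (simp add: sum_distrib_right[symmetric])
  finally show ?thesis unfolding e .
qed

lemma dtv_bound:
  assumes ne: "sat_assignments V C \<noteq> {}" and M0: "M \<noteq> {}" and X0: "X0 \<in> Om M"
  shows "dtv (Om M) (kernel_pow (Om M) (glauber V C M) t X0) (marginal V C M) \<le> card M * rr ^ t"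
proof -
  let ?\<pi> = "marginal V C M"
  let ?p = "kernel_pow (Om M) (glauber V C M) t X0"
  define g1 where "g1 Y = (if ?\<pi> Y \<le> ?p Y then 1 else 0 :: real)" for Y
  define g2 where "g2 Y = 1 - g1 Y" for Y
  have P: "Pf t g X0 = (\<Sum>Y\<in>Om M. ?p Y * g Y)" for g unfolding Pf_def ..
  have b1: "\<bar>Pf t g1 X0 - (\<Sum>X\<in>Om M. ?\<pi> X * g1 X)\<bar> \<le> card M * rr ^ t"
    by (rule dev_bound[OF ne M0 X0]) (auto simp: g1_def)
  have b2: "\<bar>Pf t g2 X0 - (\<Sum>X\<in>Om M. ?\<pi> X * g2 X)\<bar> \<le> card M * rr ^ t"
    by (rule dev_bound[OF ne M0 X0]) (auto simp: g2_def g1_def)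
  have pt: "\<bar>?p Y - ?\<pi> Y\<bar> = (?p Y * g1 Y - ?\<pi> Y * g1 Y) - (?p Y * g2 Y - ?\<pi> Y * g2 Y)" for Y
    unfolding g2_def g1_def by (auto simp: algebra_simps)
  have "(\<Sum>Y\<in>Om M. \<bar>?p Y - ?\<pi> Y\<bar>) = (Pf t g1 X0 - (\<Sum>X\<in>Om M. ?\<pi> X * g1 X)) - (Pf t g2 X0 - (\<Sum>X\<in>Om M. ?\<pi> X * g2 X))"
    unfolding P pt by (simp add: sum_subtractf)
  also have "\<dots> \<le> 2 * (card M * rr ^ t)" using b1 b2 by (simp add: abs_le_iff)
  finally show ?thesis unfolding dtv_def by simp
qed

lemma dtv_empty:
  assumes ne: "sat_assignments V C \<noteq> {}" and M0: "M = {}" and X0: "X0 \<in> Om M"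
  shows "dtv (Om M) (kernel_pow (Om M) (glauber V C M) 0 X0) (marginal V C M) = 0"
proof -
  have Om: "Om M = {X0}" using X0 M0 unfolding Om_def by auto
  have "marginal V C M X0 = 1" using marg_sum[OF ne] Om by simp
  thus ?thesis unfolding dtv_def Om by simp
qed

end


lemma final_num:
  fixes m n :: nat and \<delta> :: real
  assumes m1: "1 \<le> m" and mn: "m \<le> n" and d0: "0 < \<delta>" and d1: "\<delta> < 1"
  shows "real m * (1 - 1 / (2 * real m)) ^ nat \<lceil>2 * real n * log 2 (real n / \<delta>)\<rceil> \<le> \<delta>"
proof -
  define T where "T = nat \<lceil>2 * real n * log 2 (real n / \<delta>)\<rceil>"
  define x where "x = real n / \<delta>"
  have n1: "1 \<le> real n" using m1 mn by simp
  have x1: "1 < x" unfolding x_def using n1 d0 d1 by (simp add: field_simps)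
  have lx: "0 < ln x" using x1 by simp
  have l2: "0 < ln (2::real)" "ln (2::real) < 1" using ln_2_less_1 by auto
  have lg: "ln x \<le> log 2 x" unfolding log_def using lx l2 by (simp add: field_simps mult_left_le)
  have T: "2 * real n * log 2 x \<le> real T" unfolding T_def x_def by (rule real_nat_ceiling_ge)
  have "2 * real m * ln x \<le> 2 * real n * log 2 x"
    using lg mn lx by (intro mult_mono) auto
  hence T2: "2 * real m * ln x \<le> real T" using T by linarith
  have m0: "0 < real m" using m1 by simp
  have base: "0 \<le> 1 - 1 / (2 * real m)" using m1 by (simp add: field_simps)
  have "(1 - 1 / (2 * real m)) ^ T \<le> exp (- (1 / (2 * real m))) ^ T"
    using base by (intro power_mono) (use exp_ge_add_one_self[of "- (1 / (2 * real m))"] in auto)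
  also have "\<dots> = exp (real T * (- (1 / (2 * real m))))" by (rule exp_of_nat_mult[symmetric])
  also have "\<dots> \<le> exp (- ln x)"
  proof -
    have "ln x \<le> real T / (2 * real m)" using T2 m0 by (simp add: field_simps)
    thus ?thesis by simp
  qed
  also have "\<dots> = \<delta> / real n" unfolding x_def using x1 d0 n1 by (simp add: exp_minus field_simps)
  finally have "(1 - 1 / (2 * real m)) ^ T \<le> \<delta> / real n" .
  hence "real m * (1 - 1 / (2 * real m)) ^ T \<le> real m * (\<delta> / real n)" by (rule mult_left_mono) simp
  also have "\<dots> \<le> \<delta>" using mn n1 d0 by (simp add: field_simps)
  finally show ?thesis unfolding T_def .
qed

context formula
begin

lemma main_bound:
  assumes ne: "sat_assignments V C \<noteq> {}" and d0: "0 < \<delta>" and d1: "\<delta> < 1"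
  shows "int (mixing_time (M \<rightarrow>\<^sub>E (UNIV :: bool set)) (glauber V C M) (marginal V C M) \<delta>)
           \<le> \<lceil>2 * real (card V) * log 2 (real (card V) / \<delta>)\<rceil>"
proof -
  define R where "R = \<lceil>2 * real (card V) * log 2 (real (card V) / \<delta>)\<rceil>"
  define T where "T = nat R"
  have R0: "0 \<le> R"
  proof (cases "card V = 0")
    case True thus ?thesis unfolding R_def by simp
  next
    case False
    hence "1 < real (card V) / \<delta>" using d0 d1 by (simp add: field_simps)
    hence "0 < log 2 (real (card V) / \<delta>)" by simp
    hence "0 \<le> 2 * real (card V) * log 2 (real (card V) / \<delta>)" by simp
    thus ?thesis unfolding R_def by simp
  qed
  have S: "M \<rightarrow>\<^sub>E (UNIV :: bool set) = Om M" unfolding Om_def ..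
  let ?f = "\<lambda>x0. LEAST t. dtv (Om M) (kernel_pow (Om M) (glauber V C M) t x0) (marginal V C M) \<le> \<delta>"
  have each: "?f X0 \<le> T" if X0: "X0 \<in> Om M" for X0
  proof (cases "M = {}")
    case True
    have "dtv (Om M) (kernel_pow (Om M) (glauber V C M) 0 X0) (marginal V C M) \<le> \<delta>"
      using dtv_empty[OF ne True X0] d0 by simp
    hence "?f X0 \<le> 0" by (rule Least_le)
    thus ?thesis by simp
  next
    case False
    have m1: "1 \<le> card M" using False finM by (simp add: Suc_le_eq card_gt_0_iff)
    have mn: "card M \<le> card V" using MV finV by (rule card_mono[rotated])
    have "dtv (Om M) (kernel_pow (Om M) (glauber V C M) T X0) (marginal V C M) \<le> card M * rr ^ T"
      by (rule dtv_bound[OF ne False X0])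
    also have "\<dots> \<le> \<delta>"
    proof -
      have "rr = 1 - 1 / (2 * real (card M))" unfolding rr_def by simp
      thus ?thesis unfolding T_def R_def using final_num[OF m1 mn d0 d1] by simp
    qed
    finally show ?thesis by (rule Least_le)
  qed
  have ne2: "Om M \<noteq> {}" unfolding Om_def by (simp add: PiE_eq_empty_iff)
  have "mixing_time (Om M) (glauber V C M) (marginal V C M) \<delta> \<le> T"
    unfolding mixing_time_def by (subst Max_le_iff) (use finOm ne2 each in auto)
  hence "int (mixing_time (Om M) (glauber V C M) (marginal V C M) \<delta>) \<le> int T" by simp
  also have "\<dots> = R" unfolding T_def using R0 by simp
  finally show ?thesis unfolding S R_def .
qed

end

theorem lemma4p1:
  fixes V :: "'v set" and C :: "'v clause set" and M :: "'v set"
    and k d k\<alpha> k\<beta> :: nat and \<delta> :: real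
  assumes "cnf_formula V C"
    and "k_uniform k C"
    and "max_degree_le V C d"
    and "sat_assignments V C \<noteq> {}"
    and "1 \<le> k\<alpha>" and "1 \<le> k\<beta>" and "k\<alpha> + k\<beta> \<le> k"
    and "M \<subseteq> V"
    and "\<forall>c\<in>C. card (clause_vars c \<inter> M) \<ge> k\<alpha> \<and> card (clause_vars c - M) \<ge> k\<beta>"
    and "(2::nat) ^ k\<beta> \<ge> 2 ^ 16 * d ^ 9 * k ^ 9"
    and "0 < \<delta>" and "\<delta> < 1"
  shows "int (mixing_time (M \<rightarrow>\<^sub>E (UNIV :: bool set)) (glauber V C M) (marginal V C M) \<delta>)
           \<le> \<lceil>2 * real (card V) * log 2 (real (card V) / \<delta>)\<rceil>"
proof (cases "C = {}")
  case True
  have "formula V C M 1 1 16"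
  proof
    show "cnf_formula V C" by fact
    show "k_uniform 1 C" unfolding k_uniform_def True by simp
    show "max_degree_le V C 1" unfolding max_degree_le_def True by simp
    show "M \<subseteq> V" by fact
  qed (auto simp: True)
  thus ?thesis by (rule formula.main_bound) fact+
next
  case False
  then obtain c where c: "c \<in> C" by blast
  have ck: "card (clause_vars c) = k" using assms(2) c unfolding k_uniform_def clause_vars_def by blast
  have k1: "1 \<le> k" using assms(5,6,7) by simp
  then obtain u where u: "u \<in> clause_vars c" using ck by (metis card.empty equals0I not_one_le_zero)
  have uV: "u \<in> V" using assms(1) c u unfolding cnf_formula_def clause_vars_def by blast
  have finC: "finite C" using assms(1) unfolding cnf_formula_def by blast
  have "1 \<le> card {c \<in> C. u \<in> clause_vars c}"
  proof -
    have "c \<in> {c \<in> C. u \<in> clause_vars c}" using c u by blast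
    moreover have "finite {c \<in> C. u \<in> clause_vars c}" using finC by simp
    ultimately show ?thesis by (metis One_nat_def Suc_leI card_gt_0_iff empty_iff)
  qed
  also have "\<dots> \<le> d" using assms(3) uV unfolding max_degree_le_def by blast
  finally have d1: "1 \<le> d" .
  have "formula V C M k d k\<beta>"
  proof
    show "cnf_formula V C" by fact
    show "k_uniform k C" by fact
    show "max_degree_le V C d" by fact
    show "M \<subseteq> V" by fact
    show "k\<beta> \<le> card (clause_vars c - M)" if "c \<in> C" for c using assms(9) that by blast
    show "1 \<le> k\<beta>" by fact
    show "1 \<le> d" by fact
    show "1 \<le> k" by fact
    show "2 ^ 16 * d ^ 9 * k ^ 9 \<le> (2::nat) ^ k\<beta>" using assms(10) by simp
  qed
  thus ?thesis by (rule formula.main_bound) fact+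
qed


end
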